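(* Let $T:(E^\sharp,E)\to(F^\sharp,F)$ be a map of pairs of topological vector spaces, where $E$, $E^\sharp$, $F$ are DFS spaces, given as injective limits $E=\varinjlim E_j$, $E^\sharp=\varinjlim E^\sharp_k$, $F=\varinjlim F_k$ of injective sequences of Banach spaces with compact inclusion maps, such that $E\subset E^\sharp_0$ with continuous inclusion $E\hookrightarrow E^\sharp_0$, and where $F^\sharp$ is a Hausdorff topological vector space. If $T$ satisfies property $(\mathcal H)$, then $T:E\to F$ has closed range.
   Context: A pair of topological vector spaces $(E^\sharp,E)$ consists of a topological vector space $E^\sharp$ and a linear subspace $E\subset E^\sharp$ carrying a topology finer than the one induced from $E^\sharp$. A map of pairs $T:(E^\sharp,E)\to(F^\sharp,F)$ is a continuous linear map $T:E^\sharp\to F^\sharp$ with $T(E)\subset F$ such that the induced map $T:E\to F$ is continuous. $T$ satisfies property $(\mathcal H)$ if for every $u\in E^\sharp$ with $Tu\in F$ one has $u\in E$. A DFS space is the (locally convex) injective limit of an increasing sequence of Banach spaces whose inclusion maps are compact and injective. *)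

theory Defs
  imports "HOL-Analysis.Analysis"
begin

definition is_linear_on :: "'a::real_vector set \<Rightarrow> ('a \<Rightarrow> 'b::real_vector) \<Rightarrow> bool" where
  "is_linear_on S T \<longleftrightarrow>
     (\<forall>x\<in>S. \<forall>y\<in>S. T (x + y) = T x + T y) \<and> (\<forall>c. \<forall>x\<in>S. T (c *\<^sub>R x) = c *\<^sub>R T x)"

definition banach_on :: "'a::real_vector set \<Rightarrow> ('a \<Rightarrow> real) \<Rightarrow> bool" where
  "banach_on B N \<longleftrightarrow>
     subspace B \<and>
     (\<forall>x\<in>B. 0 \<le> N x) \<and> (\<forall>x\<in>B. N x = 0 \<longrightarrow> x = 0) \<and>
     (\<forall>x\<in>B. \<forall>y\<in>B. N (x + y) \<le> N x + N y) \<and>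
     (\<forall>c. \<forall>x\<in>B. N (c *\<^sub>R x) = \<bar>c\<bar> * N x) \<and>
     (\<forall>u::nat \<Rightarrow> 'a. (\<forall>n. u n \<in> B) \<and> (\<forall>e>0. \<exists>M. \<forall>m\<ge>M. \<forall>n\<ge>M. N (u m - u n) < e)
        \<longrightarrow> (\<exists>l\<in>B. (\<lambda>n. N (u n - l)) \<longlonglongrightarrow> 0))"

definition norm_topology :: "'a::real_vector set \<Rightarrow> ('a \<Rightarrow> real) \<Rightarrow> 'a topology" where
  "norm_topology B N = topology (\<lambda>U. U \<subseteq> B \<and>
      (\<forall>x\<in>U. \<exists>r>0. {y\<in>B. N (y - x) < r} \<subseteq> U))"

definition absolutely_convex :: "'a::real_vector set \<Rightarrow> bool" where
  "absolutely_convex V \<longleftrightarrow> convex V \<and> (\<forall>x\<in>V. \<forall>c. \<bar>c\<bar> \<le> 1 \<longrightarrow> c *\<^sub>R x \<in> V)"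

definition lc_inductive_limit :: "(nat \<Rightarrow> 'a::real_vector set) \<Rightarrow> (nat \<Rightarrow> 'a \<Rightarrow> real) \<Rightarrow> 'a topology" where
  "lc_inductive_limit Bs Ns = topology (\<lambda>U. U \<subseteq> (\<Union>j. Bs j) \<and>
      (\<forall>x\<in>U. \<exists>V. V \<subseteq> (\<Union>j. Bs j) \<and> absolutely_convex V \<and>
          (\<forall>j. \<exists>r>0. {y\<in>Bs j. Ns j y < r} \<subseteq> V) \<and> (\<lambda>v. x + v) ` V \<subseteq> U))"

definition compact_inclusion :: "'a::real_vector set \<Rightarrow> ('a \<Rightarrow> real) \<Rightarrow> 'a set \<Rightarrow> ('a \<Rightarrow> real) \<Rightarrow> bool" where
  "compact_inclusion B1 N1 B2 N2 \<longleftrightarrow> B1 \<subseteq> B2 \<and>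
     compactin (norm_topology B2 N2) (norm_topology B2 N2 closure_of {x\<in>B1. N1 x \<le> 1})"

definition DFS_limit :: "'a::real_vector set \<Rightarrow> 'a topology \<Rightarrow> (nat \<Rightarrow> 'a set) \<Rightarrow> (nat \<Rightarrow> 'a \<Rightarrow> real) \<Rightarrow> bool" where
  "DFS_limit E tau Bs Ns \<longleftrightarrow>
     (\<forall>j. banach_on (Bs j) (Ns j)) \<and>
     (\<forall>j. compact_inclusion (Bs j) (Ns j) (Bs (Suc j)) (Ns (Suc j))) \<and>
     E = (\<Union>j. Bs j) \<and> tau = lc_inductive_limit Bs Ns"

definition hausdorff_tvs :: "'a::real_vector set \<Rightarrow> 'a topology \<Rightarrow> bool" where
  "hausdorff_tvs S tau \<longleftrightarrow> subspace S \<and> topspace tau = S \<and> Hausdorff_space tau \<and>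
     continuous_map (prod_topology tau tau) tau (\<lambda>(x, y). x + y) \<and>
     continuous_map (prod_topology euclideanreal tau) tau (\<lambda>(c, x). c *\<^sub>R x)"

end

theory Submission
  imports Defs
begin

lemma istopology_norm: fixes N :: "'a::real_vector \<Rightarrow> real" shows "istopology (\<lambda>U. U \<subseteq> B \<and> (\<forall>x\<in>U. \<exists>r>0. {y\<in>B. N (y - x) < r} \<subseteq> U))"
  unfolding istopology_def
proof (rule conjI; intro allI impI)
  fix S T assume S: "S \<subseteq> B \<and> (\<forall>x\<in>S. \<exists>r>0. {y\<in>B. N (y - x) < r} \<subseteq> S)"
    and T: "T \<subseteq> B \<and> (\<forall>x\<in>T. \<exists>r>0. {y\<in>B. N (y - x) < r} \<subseteq> T)"
  show "S \<inter> T \<subseteq> B \<and> (\<forall>x\<in>S \<inter> T. \<exists>r>0. {y \<in> B. N (y - x) < r} \<subseteq> S \<inter> T)"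
  proof (intro conjI ballI)
    show "S \<inter> T \<subseteq> B" using S by blast
    fix x assume "x \<in> S \<inter> T"
    then obtain r1 r2 where "r1 > 0" "{y\<in>B. N (y - x) < r1} \<subseteq> S" "r2 > 0" "{y\<in>B. N (y - x) < r2} \<subseteq> T"
      using S T by blast
    then show "\<exists>r>0. {y \<in> B. N (y - x) < r} \<subseteq> S \<inter> T"
      by (intro exI[of _ "min r1 r2"]) auto
  qed
next
  fix K assume "\<forall>S\<in>K. S \<subseteq> B \<and> (\<forall>x\<in>S. \<exists>r>0. {y \<in> B. N (y - x) < r} \<subseteq> S)"
  then show "\<Union> K \<subseteq> B \<and> (\<forall>x\<in>\<Union> K. \<exists>r>0. {y \<in> B. N (y - x) < r} \<subseteq> \<Union> K)"
    by (meson Union_least Union_upper UnionE order_trans)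
qed

lemma openin_norm_topology:
  "openin (norm_topology B N) U \<longleftrightarrow> U \<subseteq> B \<and> (\<forall>x\<in>U. \<exists>r>0. {y\<in>B. N (y - x) < r} \<subseteq> U)"
  unfolding norm_topology_def topology_inverse'[OF istopology_norm] by simp

lemma topspace_norm_topology: "topspace (norm_topology B N) = B"
proof -
  have "openin (norm_topology B N) B" unfolding openin_norm_topology by (auto intro: exI[of _ 1])
  then show ?thesis using openin_subset[of "norm_topology B N"] openin_norm_topology
    by (metis openin_topspace subset_antisym)
qed

lemma istopology_lc: fixes Ns :: "nat \<Rightarrow> 'a::real_vector \<Rightarrow> real" shows "istopology (\<lambda>U. U \<subseteq> (\<Union>j. Bs j) \<and>
      (\<forall>x\<in>U. \<exists>V. V \<subseteq> (\<Union>j. Bs j) \<and> absolutely_convex V \<and>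
          (\<forall>j. \<exists>r>0. {y\<in>Bs j. Ns j y < r} \<subseteq> V) \<and> (\<lambda>v. x + v) ` V \<subseteq> U))"
  unfolding istopology_def
proof (rule conjI; intro allI impI)
  fix S T assume S: "S \<subseteq> (\<Union>j. Bs j) \<and> (\<forall>x\<in>S. \<exists>V. V \<subseteq> (\<Union>j. Bs j) \<and> absolutely_convex V \<and>
          (\<forall>j. \<exists>r>0. {y\<in>Bs j. Ns j y < r} \<subseteq> V) \<and> (\<lambda>v. x + v) ` V \<subseteq> S)"
    and T: "T \<subseteq> (\<Union>j. Bs j) \<and> (\<forall>x\<in>T. \<exists>V. V \<subseteq> (\<Union>j. Bs j) \<and> absolutely_convex V \<and>
          (\<forall>j. \<exists>r>0. {y\<in>Bs j. Ns j y < r} \<subseteq> V) \<and> (\<lambda>v. x + v) ` V \<subseteq> T)"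
  show "S \<inter> T \<subseteq> (\<Union>j. Bs j) \<and> (\<forall>x\<in>S \<inter> T. \<exists>V. V \<subseteq> (\<Union>j. Bs j) \<and> absolutely_convex V \<and>
          (\<forall>j. \<exists>r>0. {y\<in>Bs j. Ns j y < r} \<subseteq> V) \<and> (\<lambda>v. x + v) ` V \<subseteq> S \<inter> T)"
  proof (intro conjI ballI)
    show "S \<inter> T \<subseteq> (\<Union>j. Bs j)" using S by blast
    fix x assume "x \<in> S \<inter> T"
    obtain V1 where V1: "V1 \<subseteq> (\<Union>j. Bs j)" "absolutely_convex V1"
          "(\<forall>j. \<exists>r>0. {y\<in>Bs j. Ns j y < r} \<subseteq> V1)" "(\<lambda>v. x + v) ` V1 \<subseteq> S"
      using S \<open>x \<in> S \<inter> T\<close> by blast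
    obtain V2 where V2: "V2 \<subseteq> (\<Union>j. Bs j)" "absolutely_convex V2"
          "(\<forall>j. \<exists>r>0. {y\<in>Bs j. Ns j y < r} \<subseteq> V2)" "(\<lambda>v. x + v) ` V2 \<subseteq> T"
      using T \<open>x \<in> S \<inter> T\<close> by blast
    have "absolutely_convex (V1 \<inter> V2)"
      using V1(2) V2(2) unfolding absolutely_convex_def by (auto intro: convex_Int)
    moreover have "\<forall>j. \<exists>r>0. {y\<in>Bs j. Ns j y < r} \<subseteq> V1 \<inter> V2"
    proof
      fix j
      obtain r1 r2 where "r1 > 0" "{y\<in>Bs j. Ns j y < r1} \<subseteq> V1" "r2 > 0" "{y\<in>Bs j. Ns j y < r2} \<subseteq> V2"
        using V1(3) V2(3) by meson
      then show "\<exists>r>0. {y\<in>Bs j. Ns j y < r} \<subseteq> V1 \<inter> V2"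
        by (intro exI[of _ "min r1 r2"]) auto
    qed
    ultimately show "\<exists>V. V \<subseteq> (\<Union>j. Bs j) \<and> absolutely_convex V \<and>
          (\<forall>j. \<exists>r>0. {y\<in>Bs j. Ns j y < r} \<subseteq> V) \<and> (\<lambda>v. x + v) ` V \<subseteq> S \<inter> T"
      using V1 V2 by (intro exI[of _ "V1 \<inter> V2"]) blast
  qed
next
  fix K assume "\<forall>S\<in>K. S \<subseteq> (\<Union>j. Bs j) \<and> (\<forall>x\<in>S. \<exists>V. V \<subseteq> (\<Union>j. Bs j) \<and> absolutely_convex V \<and>
          (\<forall>j. \<exists>r>0. {y\<in>Bs j. Ns j y < r} \<subseteq> V) \<and> (\<lambda>v. x + v) ` V \<subseteq> S)"
  then show "\<Union>K \<subseteq> (\<Union>j. Bs j) \<and> (\<forall>x\<in>\<Union>K. \<exists>V. V \<subseteq> (\<Union>j. Bs j) \<and> absolutely_convex V \<and>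
          (\<forall>j. \<exists>r>0. {y\<in>Bs j. Ns j y < r} \<subseteq> V) \<and> (\<lambda>v. x + v) ` V \<subseteq> \<Union>K)"
    by (smt (verit) UnionE Union_least Union_upper order_trans)
qed

lemma openin_lc: "openin (lc_inductive_limit Bs Ns) U \<longleftrightarrow> U \<subseteq> (\<Union>j. Bs j) \<and>
      (\<forall>x\<in>U. \<exists>V. V \<subseteq> (\<Union>j. Bs j) \<and> absolutely_convex V \<and>
          (\<forall>j. \<exists>r>0. {y\<in>Bs j. Ns j y < r} \<subseteq> V) \<and> (\<lambda>v. x + v) ` V \<subseteq> U)"
  unfolding lc_inductive_limit_def topology_inverse'[OF istopology_lc] by simp

locale bspace = fixes B :: "'a::real_vector set" and N :: "'a \<Rightarrow> real"
  assumes ban: "banach_on B N"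
begin

lemma banc: "subspace B \<and>
     (\<forall>x\<in>B. 0 \<le> N x) \<and> (\<forall>x\<in>B. N x = 0 \<longrightarrow> x = 0) \<and>
     (\<forall>x\<in>B. \<forall>y\<in>B. N (x + y) \<le> N x + N y) \<and>
     (\<forall>c. \<forall>x\<in>B. N (c *\<^sub>R x) = \<bar>c\<bar> * N x) \<and>
     (\<forall>u::nat \<Rightarrow> 'a. (\<forall>n. u n \<in> B) \<and> (\<forall>e>0. \<exists>M. \<forall>m\<ge>M. \<forall>n\<ge>M. N (u m - u n) < e)
        \<longrightarrow> (\<exists>l\<in>B. (\<lambda>n. N (u n - l)) \<longlonglongrightarrow> 0))"
  using ban unfolding banach_on_def .
lemma sub: "subspace B" using conjunct1[OF banc] .
lemma nonneg: "x\<in>B \<Longrightarrow> 0 \<le> N x" using conjunct1[OF conjunct2[OF banc]] by (rule bspec)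
lemma zero_imp: "x\<in>B \<Longrightarrow> N x = 0 \<Longrightarrow> x = 0"
  using conjunct1[OF conjunct2[OF conjunct2[OF banc]]] by blast
lemma tri: "x\<in>B \<Longrightarrow> y\<in>B \<Longrightarrow> N (x+y) \<le> N x + N y"
  using conjunct1[OF conjunct2[OF conjunct2[OF conjunct2[OF banc]]]] by blast
lemma scale: "x\<in>B \<Longrightarrow> N (c *\<^sub>R x) = \<bar>c\<bar> * N x"
  using conjunct1[OF conjunct2[OF conjunct2[OF conjunct2[OF conjunct2[OF banc]]]]] by blast
lemma complete: "(\<And>n. u n \<in> B) \<Longrightarrow> (\<And>e. e>0 \<Longrightarrow> \<exists>M. \<forall>m\<ge>M. \<forall>n\<ge>M. N (u m - u n) < e)
   \<Longrightarrow> \<exists>l\<in>B. (\<lambda>n. N (u n - l)) \<longlonglongrightarrow> 0"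
proof -
  assume a: "\<And>n. u n \<in> B" "\<And>e. e>0 \<Longrightarrow> \<exists>M. \<forall>m\<ge>M. \<forall>n\<ge>M. N (u m - u n) < e"
  have "(\<forall>n. u n \<in> B) \<and> (\<forall>e>0. \<exists>M. \<forall>m\<ge>M. \<forall>n\<ge>M. N (u m - u n) < e)" using a by blast
  then show ?thesis using conjunct2[OF conjunct2[OF conjunct2[OF conjunct2[OF conjunct2[OF banc]]]]] by blast
qed

lemma zero_mem[simp]: "0 \<in> B" using sub subspace_0 by blast
lemma add_mem: "x\<in>B \<Longrightarrow> y\<in>B \<Longrightarrow> x + y \<in> B" using sub subspace_add by blast
lemma diff_mem: "x\<in>B \<Longrightarrow> y\<in>B \<Longrightarrow> x - y \<in> B" using sub subspace_diff by blast
lemma scale_mem: "x\<in>B \<Longrightarrow> c *\<^sub>R x \<in> B" using sub subspace_scale by blast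
lemma neg_mem: "x\<in>B \<Longrightarrow> - x \<in> B" using sub subspace_neg by blast

lemma N0[simp]: "N 0 = 0" using scale[of 0 0] by simp
lemma Nneg: "x\<in>B \<Longrightarrow> N (- x) = N x" using scale[of x "-1"] by simp
lemma Nsym: "x\<in>B \<Longrightarrow> y\<in>B \<Longrightarrow> N (x - y) = N (y - x)"
  using Nneg[of "y - x"] diff_mem by simp
lemma Ntri: "x\<in>B \<Longrightarrow> y\<in>B \<Longrightarrow> z\<in>B \<Longrightarrow> N (x - z) \<le> N (x - y) + N (y - z)"
  using tri[of "x - y" "y - z"] diff_mem by simp
lemma Ndiff: "x\<in>B \<Longrightarrow> y\<in>B \<Longrightarrow> N x \<le> N y + N (x - y)"
  using tri[of y "x - y"] diff_mem by simp
lemma Ntri3: "x\<in>B \<Longrightarrow> y\<in>B \<Longrightarrow> N (x - y) \<le> N x + N y"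
  using tri[of x "- y"] neg_mem Nneg by simp

definition nd where "nd x y = (if x \<in> B \<and> y \<in> B then N (x - y) else 0)"

lemma metric: "Metric_space B nd"
proof
  show "0 \<le> nd x y" for x y unfolding nd_def using nonneg[OF diff_mem[of x y]] by simp
  show "nd x y = nd y x" for x y unfolding nd_def using Nsym[of x y] by simp
  show "x \<in> B \<Longrightarrow> y \<in> B \<Longrightarrow> (nd x y = 0) = (x = y)" for x y
  proof -
    assume xy: "x \<in> B" "y \<in> B"
    have "N (x - y) = 0 \<longleftrightarrow> x = y"
    proof
      assume "N (x - y) = 0" then have "x - y = 0" using zero_imp[OF diff_mem[OF xy]] by blast
      then show "x = y" by simp
    qed simp
    then show ?thesis unfolding nd_def using xy by simp
  qed
  show "x \<in> B \<Longrightarrow> y \<in> B \<Longrightarrow> z \<in> B \<Longrightarrow> nd x z \<le> nd x y + nd y z" for x y z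
    unfolding nd_def using Ntri[of x y z] by simp
qed

lemma ntop: "norm_topology B N = (Metric_space.mtopology B nd)"
proof (rule topology_eq[THEN iffD2], intro allI)
  fix U
  have mb: "{y\<in>B. N (y - x) < r} = (Metric_space.mball B nd x r)" if "x \<in> B" for x r
  proof (rule set_eqI)
    fix y
    show "y \<in> {y\<in>B. N (y - x) < r} \<longleftrightarrow> y \<in> Metric_space.mball B nd x r"
      unfolding Metric_space.mball_def[OF metric] nd_def using that Nsym[of x y] by auto
  qed
  have eq: "(\<forall>x\<in>U. \<exists>r>0. {y\<in>B. N (y - x) < r} \<subseteq> U) \<longleftrightarrow> (\<forall>x. x \<in> U \<longrightarrow> (\<exists>r>0. (Metric_space.mball B nd x r) \<subseteq> U))"
    if "U \<subseteq> B"
  proof -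
    { fix x assume "x \<in> U"
      then have "x \<in> B" using that by blast
      then have "(\<exists>r>0. {y\<in>B. N (y - x) < r} \<subseteq> U) \<longleftrightarrow> (\<exists>r>0. (Metric_space.mball B nd x r) \<subseteq> U)"
        using mb by simp }
    then show ?thesis by (simp add: Ball_def)
  qed
  show "openin (norm_topology B N) U = openin (Metric_space.mtopology B nd) U"
  proof (cases "U \<subseteq> B")
    case True
    show ?thesis unfolding openin_norm_topology Metric_space.openin_mtopology[OF metric] using eq[OF True] True by simp
  next
    case False
    show ?thesis unfolding openin_norm_topology Metric_space.openin_mtopology[OF metric] using False by simp
  qed
qed

lemma limitin_iff: "(\<And>n. f n \<in> B) \<Longrightarrow>
    limitin (norm_topology B N) f l sequentially \<longleftrightarrow> l \<in> B \<and> (\<lambda>n. N (f n - l)) \<longlonglongrightarrow> 0"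
proof -
  assume f: "\<And>n. f n \<in> B"
  show ?thesis
  proof (cases "l \<in> B")
    case True
    then have "(\<lambda>n. nd (f n) l) = (\<lambda>n. N (f n - l))" using f unfolding nd_def by auto
    then show ?thesis unfolding ntop Metric_space.limitin_metric_dist_null[OF metric] using f True by simp
  next
    case False
    then show ?thesis unfolding ntop Metric_space.limitin_metric_dist_null[OF metric] by simp
  qed
qed

end

lemma squeeze0: fixes f g :: "nat \<Rightarrow> real"
  assumes "\<And>n. 0 \<le> f n" "\<And>n. f n \<le> g n" "g \<longlonglongrightarrow> 0" shows "f \<longlonglongrightarrow> 0"
  by (rule Lim_null_comparison[of f g]) (use assms in auto)

lemma cmult0: fixes f :: "nat \<Rightarrow> real" shows "f \<longlonglongrightarrow> 0 \<Longrightarrow> (\<lambda>n. c * f n) \<longlonglongrightarrow> 0"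
  using tendsto_mult[OF tendsto_const[of c], of f 0] by simp

lemma eventually_lt0: fixes f :: "nat \<Rightarrow> real"
  assumes "f \<longlonglongrightarrow> 0" "e > 0" obtains M where "\<And>n. n \<ge> M \<Longrightarrow> f n < e"
  using order_tendstoD(2)[OF assms] unfolding eventually_sequentially by blast

locale dfs = fixes Bs :: "nat \<Rightarrow> 'a::real_vector set" and Ns :: "nat \<Rightarrow> 'a \<Rightarrow> real"
  assumes ban: "\<And>j. banach_on (Bs j) (Ns j)"
    and ci: "\<And>j. compact_inclusion (Bs j) (Ns j) (Bs (Suc j)) (Ns (Suc j))"
begin

lemma bs: "bspace (Bs j) (Ns j)" unfolding bspace_def using ban .

lemma step_sub: "Bs j \<subseteq> Bs (Suc j)" using ci unfolding compact_inclusion_def by blast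

lemma mono_sub: "j \<le> k \<Longrightarrow> Bs j \<subseteq> Bs k"
  using lift_Suc_mono_le[of Bs, OF step_sub] by blast

definition K where "K j = norm_topology (Bs (Suc j)) (Ns (Suc j)) closure_of {x\<in>Bs j. Ns j x \<le> 1}"

lemma cptK: "compactin (Metric_space.mtopology (Bs (Suc j)) (bspace.nd (Bs (Suc j)) (Ns (Suc j)))) (K j)"
  using ci[of j] unfolding compact_inclusion_def K_def bspace.ntop[OF bs] by blast

lemma ballK: "{x\<in>Bs j. Ns j x \<le> 1} \<subseteq> K j"
  unfolding K_def by (rule closure_of_subset) (use step_sub[of j] in \<open>auto simp: topspace_norm_topology\<close>)

lemma K_sub: "K j \<subseteq> Bs (Suc j)"
  unfolding K_def using closure_of_subset_topspace topspace_norm_topology by metis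

lemma bound1: "\<exists>c>0. \<forall>x\<in>Bs j. Ns (Suc j) x \<le> c * Ns j x"
proof -
  interpret S: bspace "Bs (Suc j)" "Ns (Suc j)" by (rule bs)
  interpret J: bspace "Bs j" "Ns j" by (rule bs)
  have "Metric_space.mbounded (Bs (Suc j)) S.nd (K j)"
    using Metric_space.compactin_imp_mbounded[OF S.metric cptK] .
  then obtain Bd where Bd: "Bd > 0" "\<forall>x\<in>K j. \<forall>y\<in>K j. S.nd x y \<le> Bd"
    unfolding Metric_space.mbounded_alt_pos[OF S.metric] by blast
  have zK: "0 \<in> K j" using ballK[of j] by auto
  have ub: "Ns (Suc j) x \<le> Bd" if "x \<in> Bs j" "Ns j x \<le> 1" for x
  proof -
    have xK: "x \<in> K j" using ballK[of j] that by auto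
    then have "S.nd x 0 \<le> Bd" using Bd zK by blast
    moreover have "x \<in> Bs (Suc j)" using xK K_sub by blast
    ultimately show ?thesis unfolding S.nd_def by simp
  qed
  have "Ns (Suc j) x \<le> Bd * Ns j x" if x: "x \<in> Bs j" for x
  proof (cases "Ns j x = 0")
    case True
    then have "x = 0" using J.zero_imp x by blast
    then show ?thesis by simp
  next
    case False
    then have pos: "Ns j x > 0" using J.nonneg[OF x] by simp
    define x' where "x' = (1 / Ns j x) *\<^sub>R x"
    have x'B: "x' \<in> Bs j" unfolding x'_def using J.scale_mem x by blast
    have "Ns j x' = 1" unfolding x'_def using J.scale[OF x] pos by simp
    then have "Ns (Suc j) x' \<le> Bd" using ub x'B by simp
    moreover have "x = Ns j x *\<^sub>R x'" unfolding x'_def using pos by simp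
    moreover have "x \<in> Bs (Suc j)" using x step_sub by blast
    ultimately have "Ns (Suc j) x = Ns j x * Ns (Suc j) x'"
      using S.scale[of x' "Ns j x"] x'B step_sub pos by (metis abs_of_pos subsetD)
    then show ?thesis using \<open>Ns (Suc j) x' \<le> Bd\<close> pos by (simp add: mult.commute)
  qed
  then show ?thesis using Bd by blast
qed

lemma boundjk: "j \<le> k \<Longrightarrow> \<exists>c>0. \<forall>x\<in>Bs j. Ns k x \<le> c * Ns j x"
proof (induction k rule: dec_induct)
  case base
  show ?case by (intro exI[of _ 1]) simp
next
  case (step k)
  then obtain c where c: "c > 0" "\<forall>x\<in>Bs j. Ns k x \<le> c * Ns j x" by blast
  obtain c1 where c1: "c1 > 0" "\<forall>x\<in>Bs k. Ns (Suc k) x \<le> c1 * Ns k x" using bound1 by blast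
  have "Ns (Suc k) x \<le> (c1 * c) * Ns j x" if "x \<in> Bs j" for x
  proof -
    have "x \<in> Bs k" using mono_sub[OF step(1)] that by blast
    then have "Ns (Suc k) x \<le> c1 * Ns k x" using c1 by blast
    also have "\<dots> \<le> c1 * (c * Ns j x)" using c that c1 by (simp add: mult_left_mono)
    finally show ?thesis by simp
  qed
  then show ?case using c c1 by (intro exI[of _ "c1 * c"]) simp
qed

lemma subseq:
  fixes x :: "nat \<Rightarrow> 'a"
  assumes x: "\<And>n. x n \<in> Bs j" "\<And>n. Ns j (x n) \<le> R"
  shows "\<exists>r l. strict_mono r \<and> l \<in> Bs (Suc j) \<and> (\<lambda>n. Ns (Suc j) (x (r n) - l)) \<longlonglongrightarrow> 0"
proof -
  interpret S: bspace "Bs (Suc j)" "Ns (Suc j)" by (rule bs)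
  interpret J: bspace "Bs j" "Ns j" by (rule bs)
  define R' where "R' = max R 1"
  have R': "R' > 0" "R \<le> R'" unfolding R'_def by auto
  define y where "y n = (1 / R') *\<^sub>R x n" for n
  have yB: "y n \<in> Bs j" for n unfolding y_def using J.scale_mem x by blast
  have "Ns j (y n) \<le> 1" for n
  proof -
    have "Ns j (y n) = Ns j (x n) / R'" unfolding y_def using J.scale[OF x(1)] R' by simp
    also have "\<dots> \<le> 1" using x(2)[of n] R' by simp
    finally show ?thesis .
  qed
  then have yK: "range y \<subseteq> K j" using ballK[of j] yB by blast
  have allseq: "\<forall>\<sigma>::nat\<Rightarrow>'a. range \<sigma> \<subseteq> K j
         \<longrightarrow> (\<exists>l r. l \<in> K j \<and> strict_mono r \<and> limitin (Metric_space.mtopology (Bs (Suc j)) S.nd) (\<sigma> \<circ> r) l sequentially)"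
    using cptK[of j] unfolding Metric_space.compactin_sequentially[OF S.metric] by (rule conjunct2)
  have "\<exists>l r. l \<in> K j \<and> strict_mono r \<and> limitin (Metric_space.mtopology (Bs (Suc j)) S.nd) (y \<circ> r) l sequentially"
    using spec[OF allseq, of y] yK by (rule mp)
  then obtain l r where lr: "l \<in> K j" "strict_mono r"
      "limitin (Metric_space.mtopology (Bs (Suc j)) S.nd) (y \<circ> r) l sequentially"
    by blast
  have yS: "(y \<circ> r) n \<in> Bs (Suc j)" for n using yB step_sub by auto
  have lim: "l \<in> Bs (Suc j)" "(\<lambda>n. Ns (Suc j) ((y \<circ> r) n - l)) \<longlonglongrightarrow> 0"
    using lr(3) unfolding S.ntop[symmetric] S.limitin_iff[OF yS] by auto
  have eq: "Ns (Suc j) (x (r n) - R' *\<^sub>R l) = R' * Ns (Suc j) ((y \<circ> r) n - l)" for n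
  proof -
    have "x (r n) - R' *\<^sub>R l = R' *\<^sub>R ((y \<circ> r) n - l)"
      unfolding y_def comp_def using R' by (simp add: algebra_simps)
    then show ?thesis using S.scale[OF S.diff_mem[OF yS lim(1)], of R'] R' by simp
  qed
  have "(\<lambda>n. Ns (Suc j) (x (r n) - R' *\<^sub>R l)) \<longlonglongrightarrow> 0"
    unfolding eq using cmult0[OF lim(2), of R'] .
  then show ?thesis
    using lr(2) S.scale_mem[OF lim(1)] by (intro exI[of _ r] exI[of _ "R' *\<^sub>R l"]) simp
qed

lemma union_subspace: "subspace (\<Union>j. Bs j)"
  unfolding subspace_def
proof (intro conjI ballI allI)
  show "0 \<in> (\<Union>j. Bs j)" using bspace.zero_mem[OF bs] by blast
  fix x y assume "x \<in> (\<Union>j. Bs j)" "y \<in> (\<Union>j. Bs j)"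
  then obtain i k where "x \<in> Bs i" "y \<in> Bs k" by blast
  then have "x \<in> Bs (max i k)" "y \<in> Bs (max i k)" using mono_sub[of i "max i k"] mono_sub[of k "max i k"] by auto
  then show "x + y \<in> (\<Union>j. Bs j)" using bspace.add_mem[OF bs] by blast
next
  fix c x assume "x \<in> (\<Union>j. Bs j)"
  then show "c *\<^sub>R x \<in> (\<Union>j. Bs j)" using bspace.scale_mem[OF bs] by blast
qed

lemma topspace_lc: "topspace (lc_inductive_limit Bs Ns) = (\<Union>j. Bs j)"
proof -
  have ac: "absolutely_convex (\<Union>j. Bs j)"
    unfolding absolutely_convex_def
  proof (intro conjI ballI allI impI)
    show "convex (\<Union>j. Bs j)" using union_subspace by (rule subspace_imp_convex)
    fix x c assume "x \<in> (\<Union>j. Bs j)"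
    then show "c *\<^sub>R x \<in> (\<Union>j. Bs j)" by (rule subspace_scale[OF union_subspace])
  qed
  have "openin (lc_inductive_limit Bs Ns) (\<Union>j. Bs j)"
    unfolding openin_lc
  proof (intro conjI ballI)
    fix x assume x: "x \<in> (\<Union>j. Bs j)"
    have "(\<lambda>v. x + v) ` (\<Union>j. Bs j) \<subseteq> (\<Union>j. Bs j)" using union_subspace x subspace_add by blast
    moreover have "\<forall>j. \<exists>r>0. {y\<in>Bs j. Ns j y < r} \<subseteq> (\<Union>j. Bs j)"
      by (intro allI exI[of _ "1::real"]) auto
    ultimately show "\<exists>V. V \<subseteq> (\<Union>j. Bs j) \<and> absolutely_convex V \<and>
          (\<forall>j. \<exists>r>0. {y\<in>Bs j. Ns j y < r} \<subseteq> V) \<and> (\<lambda>v. x + v) ` V \<subseteq> (\<Union>j. Bs j)"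
      using ac by (intro exI[of _ "\<Union>j. Bs j"]) simp
  qed simp
  then have "(\<Union>j. Bs j) \<subseteq> topspace (lc_inductive_limit Bs Ns)" by (rule openin_subset)
  moreover have "openin (lc_inductive_limit Bs Ns) (topspace (lc_inductive_limit Bs Ns))"
    by (rule openin_topspace)
  then have "topspace (lc_inductive_limit Bs Ns) \<subseteq> (\<Union>j. Bs j)"
    unfolding openin_lc by (rule conjunct1)
  ultimately show ?thesis by blast
qed

lemma cont_step: "continuous_map (norm_topology (Bs j) (Ns j)) (lc_inductive_limit Bs Ns) id"
  unfolding continuous_map_def topspace_lc topspace_norm_topology
proof (intro conjI allI impI)
  show "id \<in> Bs j \<rightarrow> (\<Union>j. Bs j)" by auto
  fix U assume U: "openin (lc_inductive_limit Bs Ns) U"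
  show "openin (norm_topology (Bs j) (Ns j)) {x \<in> Bs j. id x \<in> U}"
    unfolding openin_norm_topology
  proof (intro conjI ballI)
    show "{x \<in> Bs j. id x \<in> U} \<subseteq> Bs j" by blast
    fix x assume x: "x \<in> {x \<in> Bs j. id x \<in> U}"
    then obtain V where V: "\<forall>j. \<exists>r>0. {y\<in>Bs j. Ns j y < r} \<subseteq> V" "(\<lambda>v. x + v) ` V \<subseteq> U"
      using U unfolding openin_lc by auto
    then obtain r where r: "r > 0" "{y\<in>Bs j. Ns j y < r} \<subseteq> V" by blast
    have "{y \<in> Bs j. Ns j (y - x) < r} \<subseteq> {x \<in> Bs j. id x \<in> U}"
    proof
      fix y assume y: "y \<in> {y \<in> Bs j. Ns j (y - x) < r}"
      then have "y - x \<in> V" using r bspace.diff_mem[OF bs, of y j x] x by auto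
      then have "x + (y - x) \<in> U" using V(2) by blast
      then show "y \<in> {x \<in> Bs j. id x \<in> U}" using y by simp
    qed
    then show "\<exists>r>0. {y \<in> Bs j. Ns j (y - x) < r} \<subseteq> {x \<in> Bs j. id x \<in> U}" using r by blast
  qed
qed

end

lemma ac_sum:
  assumes "absolutely_convex A" "absolutely_convex C"
  shows "absolutely_convex {a + c | a c. a \<in> A \<and> c \<in> C}"
proof -
  have cA: "convex A" using assms(1) unfolding absolutely_convex_def by (rule conjunct1)
  have cC: "convex C" using assms(2) unfolding absolutely_convex_def by (rule conjunct1)
  have eq: "{a + c | a c. a \<in> A \<and> c \<in> C} = (\<Union>x\<in>A. \<Union>y\<in>C. {x + y})" by auto
  have cv: "convex {a + c | a c. a \<in> A \<and> c \<in> C}"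
    unfolding eq by (rule convex_sums[OF cA cC])
  have "t *\<^sub>R x \<in> {a + c | a c. a \<in> A \<and> c \<in> C}"
    if x: "x \<in> {a + c | a c. a \<in> A \<and> c \<in> C}" and t: "\<bar>t\<bar> \<le> 1" for x and t :: real
  proof -
    obtain a c where ac: "x = a + c" "a \<in> A" "c \<in> C" using x by blast
    have sA: "\<forall>x\<in>A. \<forall>c. \<bar>c\<bar> \<le> 1 \<longrightarrow> c *\<^sub>R x \<in> A" using assms(1) unfolding absolutely_convex_def by (rule conjunct2)
    have sC: "\<forall>x\<in>C. \<forall>c. \<bar>c\<bar> \<le> 1 \<longrightarrow> c *\<^sub>R x \<in> C" using assms(2) unfolding absolutely_convex_def by (rule conjunct2)
    have "t *\<^sub>R a \<in> A" using sA ac(2) t by simp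
    moreover have "t *\<^sub>R c \<in> C" using sC ac(3) t by simp
    moreover have "t *\<^sub>R x = t *\<^sub>R a + t *\<^sub>R c" using ac by (simp add: scaleR_right_distrib)
    ultimately show ?thesis using ac by auto
  qed
  then show ?thesis unfolding absolutely_convex_def using cv by simp
qed

context bspace begin
lemma ball_ac: "absolutely_convex {x\<in>B. N x < e}"
proof -
  have cv: "convex {x\<in>B. N x < e}"
    unfolding convex_def
  proof (intro ballI allI impI)
    fix x z and u v :: real
    assume x: "x \<in> {x\<in>B. N x < e}" and z: "z \<in> {x\<in>B. N x < e}" and u0: "0 \<le> u" and v0: "0 \<le> v" and uv1: "u + v = 1"
    have uv: "0 \<le> u \<and> 0 \<le> v \<and> u + v = 1" using u0 v0 uv1 by simp
    have xB: "x \<in> B" "N x < e" and zB: "z \<in> B" "N z < e" using x z by auto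
    have mem: "u *\<^sub>R x + v *\<^sub>R z \<in> B" using add_mem[OF scale_mem[OF xB(1)] scale_mem[OF zB(1)]] .
    have "N (u *\<^sub>R x + v *\<^sub>R z) \<le> N (u *\<^sub>R x) + N (v *\<^sub>R z)"
      using tri[OF scale_mem[OF xB(1)] scale_mem[OF zB(1)]] .
    also have "\<dots> = u * N x + v * N z" using scale xB zB uv by simp
    also have "\<dots> < e"
    proof (cases "u = 0")
      case True then show ?thesis using uv zB by simp
    next
      case False
      then have "u * N x < u * e" using uv xB by (simp add: mult_strict_left_mono)
      moreover have "v * N z \<le> v * e" using uv zB by (simp add: mult_left_mono)
      ultimately have "u * N x + v * N z < (u + v) * e" by (simp add: distrib_right)
      then show ?thesis using uv by simp
    qed
    finally show "u *\<^sub>R x + v *\<^sub>R z \<in> {x\<in>B. N x < e}" using mem by simp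
  qed
  have "c *\<^sub>R x \<in> {x\<in>B. N x < e}" if x: "x \<in> {x\<in>B. N x < e}" and c: "\<bar>c\<bar> \<le> 1" for x and c :: real
  proof -
  have "N (c *\<^sub>R x) = \<bar>c\<bar> * N x" using x scale by simp
  also have "\<dots> \<le> N x" using c nonneg[of x] x mult_left_le_one_le[of "N x" "\<bar>c\<bar>"] by auto
  finally show "c *\<^sub>R x \<in> {x\<in>B. N x < e}" using x scale_mem by auto
  qed
  then show ?thesis unfolding absolutely_convex_def using cv by simp
qed
end

context dfs begin

definition good where
  "good M p S \<longleftrightarrow> S \<subseteq> Bs p \<and> (\<forall>s. (\<forall>n::nat. s n \<in> S) \<longrightarrow>
     (\<exists>r z. strict_mono r \<and> z \<in> Bs p \<and> z \<notin> M \<and> (\<lambda>n. Ns p (s (r n) - z)) \<longlonglongrightarrow> 0))"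

definition mclosed where
  "mclosed M \<longleftrightarrow> (\<forall>p z s. (\<forall>n::nat. s n \<in> M \<inter> Bs p) \<longrightarrow> z \<in> Bs p \<longrightarrow> (\<lambda>n. Ns p (s n - z)) \<longlonglongrightarrow> 0 \<longrightarrow> z \<in> M)"

definition plusball where "plusball p S e = {a + b | a b. a \<in> S \<and> b \<in> Bs p \<and> Ns p b < e}"

lemma goodI:
  assumes "S \<subseteq> Bs p" "\<And>s. (\<And>n::nat. s n \<in> S) \<Longrightarrow>
     \<exists>r z. strict_mono r \<and> z \<in> Bs p \<and> z \<notin> M \<and> (\<lambda>n. Ns p (s (r n) - z)) \<longlonglongrightarrow> 0"
  shows "good M p S"
  unfolding good_def
proof (intro conjI allI impI)
  show "S \<subseteq> Bs p" by (rule assms(1))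
  fix s :: "nat \<Rightarrow> 'a" assume "\<forall>n. s n \<in> S"
  then show "\<exists>r z. strict_mono r \<and> z \<in> Bs p \<and> z \<notin> M \<and> (\<lambda>n. Ns p (s (r n) - z)) \<longlonglongrightarrow> 0"
    using assms(2)[of s] by blast
qed

lemma good_sub: "good M p S \<Longrightarrow> S \<subseteq> Bs p" unfolding good_def by (rule conjunct1)

lemma goodD:
  fixes s :: "nat \<Rightarrow> 'a"
  assumes "good M p S" "\<And>n::nat. s n \<in> S"
  obtains r z where "strict_mono r" "z \<in> Bs p" "z \<notin> M" "(\<lambda>n. Ns p (s (r n) - z)) \<longlonglongrightarrow> 0"
proof -
  have "\<forall>s. (\<forall>n::nat. s n \<in> S) \<longrightarrow>
     (\<exists>r z. strict_mono r \<and> z \<in> Bs p \<and> z \<notin> M \<and> (\<lambda>n. Ns p (s (r n) - z)) \<longlonglongrightarrow> 0)"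
    using assms(1) unfolding good_def by (rule conjunct2)
  then have "\<exists>r z. strict_mono r \<and> z \<in> Bs p \<and> z \<notin> M \<and> (\<lambda>n. Ns p (s (r n) - z)) \<longlonglongrightarrow> 0"
    using assms(2) by blast
  then show ?thesis using that by blast
qed

lemma mclosedD:
  fixes s :: "nat \<Rightarrow> 'a"
  assumes mc: "mclosed M" and s: "\<And>n. s n \<in> M" "\<And>n. s n \<in> Bs p" and z: "z \<in> Bs p"
    and lim: "(\<lambda>n. Ns p (s n - z)) \<longlonglongrightarrow> 0"
  shows "z \<in> M"
proof -
  have all: "\<forall>p z s. (\<forall>n::nat. s n \<in> M \<inter> Bs p) \<longrightarrow> z \<in> Bs p \<longrightarrow> (\<lambda>n. Ns p (s n - z)) \<longlonglongrightarrow> 0 \<longrightarrow> z \<in> M"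
    using mc unfolding mclosed_def .
  have "(\<forall>n::nat. s n \<in> M \<inter> Bs p) \<longrightarrow> z \<in> Bs p \<longrightarrow> (\<lambda>n. Ns p (s n - z)) \<longlonglongrightarrow> 0 \<longrightarrow> z \<in> M"
    by (rule spec[of _ s, OF spec[of _ z, OF spec[of _ p, OF all]]])
  moreover have "\<forall>n::nat. s n \<in> M \<inter> Bs p" using s by blast
  ultimately show ?thesis using z lim by blast
qed

lemma good_not_in: assumes "good M p S" "x \<in> S" shows "x \<notin> M"
proof -
  interpret P: bspace "Bs p" "Ns p" by (rule bs)
  have s: "\<And>n::nat. (\<lambda>_. x) n \<in> S" using assms(2) by simp
  obtain r z where rz: "z \<in> Bs p" "z \<notin> M" "(\<lambda>n::nat. Ns p (x - z)) \<longlonglongrightarrow> 0"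
    using goodD[OF assms(1) s] by blast
  have "Ns p (x - z) = 0" using rz(3) by (simp add: LIMSEQ_const_iff)
  moreover have "x \<in> Bs p" using good_sub[OF assms(1)] assms(2) by blast
  ultimately have "x - z = 0" using P.zero_imp P.diff_mem rz(1) by blast
  then show ?thesis using rz(2) by simp
qed

lemma good_Suc: assumes "good M p S" shows "good M (Suc p) S"
proof (rule goodI)
  interpret P: bspace "Bs p" "Ns p" by (rule bs)
  interpret Q: bspace "Bs (Suc p)" "Ns (Suc p)" by (rule bs)
  have Sp: "S \<subseteq> Bs p" by (rule good_sub[OF assms])
  show "S \<subseteq> Bs (Suc p)" using Sp step_sub[of p] by (rule order_trans)
  obtain c where c: "c > 0" "\<forall>x\<in>Bs p. Ns (Suc p) x \<le> c * Ns p x" using bound1[of p] by (elim exE conjE)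
  fix s :: "nat \<Rightarrow> 'a" assume s: "\<And>n. s n \<in> S"
  obtain r z where rz: "strict_mono r" "z \<in> Bs p" "z \<notin> M" "(\<lambda>n. Ns p (s (r n) - z)) \<longlonglongrightarrow> 0"
    by (rule goodD[OF assms s])
  have sp: "s n \<in> Bs p" for n using s[of n] Sp by (rule subsetD[rotated])
  have dp: "s n - z \<in> Bs p" for n by (rule P.diff_mem[OF sp rz(2)])
  have dq: "s n - z \<in> Bs (Suc p)" for n using dp[of n] step_sub[of p] by (rule subsetD[rotated])
  have "(\<lambda>n. Ns (Suc p) (s (r n) - z)) \<longlonglongrightarrow> 0"
  proof (rule squeeze0)
    show "0 \<le> Ns (Suc p) (s (r n) - z)" for n by (rule Q.nonneg[OF dq])
    show "Ns (Suc p) (s (r n) - z) \<le> c * Ns p (s (r n) - z)" for n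
      using c(2) dp[of "r n"] by (rule bspec)
    show "(\<lambda>n. c * Ns p (s (r n) - z)) \<longlonglongrightarrow> 0" using cmult0[OF rz(4)] .
  qed
  moreover have "z \<in> Bs (Suc p)" using rz(2) step_sub[of p] by (rule subsetD[rotated])
  ultimately show "\<exists>r z. strict_mono r \<and> z \<in> Bs (Suc p) \<and> z \<notin> M \<and> (\<lambda>n. Ns (Suc p) (s (r n) - z)) \<longlonglongrightarrow> 0"
    using rz(1,3) by (intro exI[of _ r] exI[of _ z]) simp
qed

lemma delta:
  assumes mc: "mclosed M" and g: "good M q S"
  shows "\<exists>\<delta>>0. \<forall>a\<in>S. \<forall>b\<in>Bs q. Ns q b < \<delta> \<longrightarrow> a + b \<notin> M"
proof (rule ccontr)
  interpret Q: bspace "Bs q" "Ns q" by (rule bs)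
  assume neg: "\<not> (\<exists>\<delta>>0. \<forall>a\<in>S. \<forall>b\<in>Bs q. Ns q b < \<delta> \<longrightarrow> a + b \<notin> M)"
  have h: "\<forall>n. \<exists>a. \<exists>b. a \<in> S \<and> b \<in> Bs q \<and> Ns q b < inverse (real (Suc n)) \<and> a + b \<in> M"
  proof
    fix n
    have pos: "inverse (real (Suc n)) > 0" by simp
    have "\<not> (\<forall>a\<in>S. \<forall>b\<in>Bs q. Ns q b < inverse (real (Suc n)) \<longrightarrow> a + b \<notin> M)"
    proof
      assume "\<forall>a\<in>S. \<forall>b\<in>Bs q. Ns q b < inverse (real (Suc n)) \<longrightarrow> a + b \<notin> M"
      then have "\<exists>\<delta>>0. \<forall>a\<in>S. \<forall>b\<in>Bs q. Ns q b < \<delta> \<longrightarrow> a + b \<notin> M"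
        using pos by (intro exI[of _ "inverse (real (Suc n))"]) simp
      then show False using neg by (rule notE[rotated])
    qed
    then show "\<exists>a. \<exists>b. a \<in> S \<and> b \<in> Bs q \<and> Ns q b < inverse (real (Suc n)) \<and> a + b \<in> M"
      by (simp add: Bex_def)
  qed
  obtain a where a: "\<forall>n. \<exists>b. a n \<in> S \<and> b \<in> Bs q \<and> Ns q b < inverse (real (Suc n)) \<and> a n + b \<in> M"
    by (rule exE[OF choice[OF h]])
  obtain b where b: "\<forall>n. a n \<in> S \<and> b n \<in> Bs q \<and> Ns q (b n) < inverse (real (Suc n)) \<and> a n + b n \<in> M"
    by (rule exE[OF choice[OF a]])
  have ab: "\<And>n. a n \<in> S" "\<And>n. b n \<in> Bs q" "\<And>n. Ns q (b n) < inverse (real (Suc n))"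
      "\<And>n. a n + b n \<in> M"
    using b by simp_all
  obtain r z where rz: "strict_mono r" "z \<in> Bs q" "z \<notin> M" "(\<lambda>n. Ns q (a (r n) - z)) \<longlonglongrightarrow> 0"
    by (rule goodD[OF g ab(1)])
  have aq: "a n \<in> Bs q" for n using ab(1)[of n] good_sub[OF g] by (rule subsetD[rotated])
  have "z \<in> M"
  proof (rule mclosedD[OF mc, of "\<lambda>n. a (r n) + b (r n)" q])
    show "a (r n) + b (r n) \<in> M" for n by (rule ab(4))
    show "a (r n) + b (r n) \<in> Bs q" for n by (rule Q.add_mem[OF aq ab(2)])
    show "z \<in> Bs q" by (rule rz(2))
    show "(\<lambda>n. Ns q (a (r n) + b (r n) - z)) \<longlonglongrightarrow> 0"
    proof (rule squeeze0)
      show "0 \<le> Ns q (a (r n) + b (r n) - z)" for n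
        by (rule Q.nonneg[OF Q.diff_mem[OF Q.add_mem[OF aq ab(2)] rz(2)]])
      show "Ns q (a (r n) + b (r n) - z) \<le> Ns q (a (r n) - z) + inverse (real (Suc n))" for n
      proof -
        have "a (r n) + b (r n) - z = (a (r n) - z) + b (r n)" by simp
        then have "Ns q (a (r n) + b (r n) - z) = Ns q ((a (r n) - z) + b (r n))" by (rule arg_cong)
        also have "\<dots> \<le> Ns q (a (r n) - z) + Ns q (b (r n))"
          by (rule Q.tri[OF Q.diff_mem[OF aq rz(2)] ab(2)])
        finally have "Ns q (a (r n) + b (r n) - z) \<le> Ns q (a (r n) - z) + Ns q (b (r n))" .
        moreover have "Ns q (b (r n)) < inverse (real (Suc (r n)))" by (rule ab(3))
        moreover have "inverse (real (Suc (r n))) \<le> inverse (real (Suc n))"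
          using seq_suble[OF rz(1), of n] by (simp add: le_imp_inverse_le)
        ultimately show ?thesis by linarith
      qed
      show "(\<lambda>n. Ns q (a (r n) - z) + inverse (real (Suc n))) \<longlonglongrightarrow> 0"
        using tendsto_add_zero[OF rz(4) LIMSEQ_inverse_real_of_nat] .
    qed
  qed
  then show False using rz(3) by simp
qed

end

context dfs begin

lemma step:
  assumes mc: "mclosed M" and g: "good M p S"
  shows "\<exists>e>0. good M (Suc p) (plusball p S e)"
proof -
  interpret P: bspace "Bs p" "Ns p" by (rule bs)
  interpret Q: bspace "Bs (Suc p)" "Ns (Suc p)" by (rule bs)
  have gq: "good M (Suc p) S" by (rule good_Suc[OF g])
  obtain \<delta> where \<delta>: "\<delta> > 0" "\<forall>a\<in>S. \<forall>b\<in>Bs (Suc p). Ns (Suc p) b < \<delta> \<longrightarrow> a + b \<notin> M"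
    using delta[OF mc gq] by (elim exE conjE)
  obtain c where c: "c > 0" "\<forall>x\<in>Bs p. Ns (Suc p) x \<le> c * Ns p x" using bound1[of p] by (elim exE conjE)
  define e where "e = \<delta> / (2 * c)"
  have epos: "e > 0" using \<delta> c by (simp add: e_def)
  have Sp: "S \<subseteq> Bs p" by (rule good_sub[OF g])
  have Sq: "S \<subseteq> Bs (Suc p)" by (rule good_sub[OF gq])
  have bq: "Ns (Suc p) b < \<delta> / 2" if "b \<in> Bs p" "Ns p b < e" for b
  proof -
    have "Ns (Suc p) b \<le> c * Ns p b" using c(2) that(1) by (rule bspec)
    also have "\<dots> < c * e" using that(2) c(1) by (rule mult_strict_left_mono)
    also have "c * e = \<delta> / 2" using c(1) by (simp add: e_def)
    finally show ?thesis .
  qed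
  have "good M (Suc p) (plusball p S e)"
  proof (rule goodI)
    show "plusball p S e \<subseteq> Bs (Suc p)"
    proof
      fix x assume "x \<in> plusball p S e"
      then obtain a b where ab: "x = a + b" "a \<in> S" "b \<in> Bs p" unfolding plusball_def by blast
      have "a \<in> Bs p" using ab(2) Sp by (rule subsetD[rotated])
      then have "x \<in> Bs p" using P.add_mem ab(1,3) by simp
      then show "x \<in> Bs (Suc p)" using step_sub[of p] by (rule subsetD[rotated])
    qed
    fix s :: "nat \<Rightarrow> 'a" assume s: "\<And>n. s n \<in> plusball p S e"
    have h1: "\<forall>n. \<exists>a b. s n = a + b \<and> a \<in> S \<and> b \<in> Bs p \<and> Ns p b < e"
    proof
      fix n show "\<exists>a b. s n = a + b \<and> a \<in> S \<and> b \<in> Bs p \<and> Ns p b < e"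
        using s[of n] unfolding plusball_def by blast
    qed
    obtain a where h2: "\<forall>n. \<exists>b. s n = a n + b \<and> a n \<in> S \<and> b \<in> Bs p \<and> Ns p b < e"
      by (rule exE[OF choice[OF h1]])
    obtain b where h3: "\<forall>n. s n = a n + b n \<and> a n \<in> S \<and> b n \<in> Bs p \<and> Ns p (b n) < e"
      by (rule exE[OF choice[OF h2]])
    have sab: "s n = a n + b n" and aS: "a n \<in> S" and bp: "b n \<in> Bs p" and be: "Ns p (b n) < e" for n
      using spec[OF h3, of n] by simp_all
    have aq: "a n \<in> Bs (Suc p)" for n using aS[of n] Sq by (rule subsetD[rotated])
    have bq': "b n \<in> Bs (Suc p)" for n using bp[of n] step_sub[of p] by (rule subsetD[rotated])
    obtain r1 z where rz: "strict_mono r1" "z \<in> Bs (Suc p)" "z \<notin> M" "(\<lambda>n. Ns (Suc p) (a (r1 n) - z)) \<longlonglongrightarrow> 0"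
      by (rule goodD[OF gq aS])
    have bb1: "(b \<circ> r1) n \<in> Bs p" for n using bp by simp
    have bb2: "Ns p ((b \<circ> r1) n) \<le> e" for n using be[of "r1 n"] by simp
    obtain r2 w where r2: "strict_mono r2" "w \<in> Bs (Suc p)" "(\<lambda>n. Ns (Suc p) ((b \<circ> r1) (r2 n) - w)) \<longlonglongrightarrow> 0"
      using subseq[of "b \<circ> r1" p e, OF bb1 bb2] by (elim exE conjE)
    define r where "r = r1 \<circ> r2"
    have r: "strict_mono r" unfolding r_def by (rule strict_mono_o[OF rz(1) r2(1)])
    have la: "(\<lambda>n. Ns (Suc p) (a (r n) - z)) \<longlonglongrightarrow> 0"
      using LIMSEQ_subseq_LIMSEQ[OF rz(4) r2(1)] unfolding r_def comp_def .
    have lb: "(\<lambda>n. Ns (Suc p) (b (r n) - w)) \<longlonglongrightarrow> 0"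
      using r2(3) unfolding r_def comp_def .
    have wle: "Ns (Suc p) w \<le> \<delta> / 2"
    proof (rule ccontr)
      assume "\<not> Ns (Suc p) w \<le> \<delta> / 2"
      then have epos2: "Ns (Suc p) w - \<delta> / 2 > 0" by simp
      obtain N where N: "\<And>n. n \<ge> N \<Longrightarrow> Ns (Suc p) (b (r n) - w) < Ns (Suc p) w - \<delta> / 2"
        using eventually_lt0[OF lb epos2] by blast
      have "Ns (Suc p) w \<le> Ns (Suc p) (b (r N)) + Ns (Suc p) (w - b (r N))"
        by (rule Q.Ndiff[OF r2(2) bq'])
      moreover have "Ns (Suc p) (w - b (r N)) = Ns (Suc p) (b (r N) - w)" by (rule Q.Nsym[OF r2(2) bq'])
      moreover have "Ns (Suc p) (b (r N)) < \<delta> / 2" by (rule bq[OF bp be])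
      moreover have "Ns (Suc p) (b (r N) - w) < Ns (Suc p) w - \<delta> / 2" by (rule N) simp
      ultimately show False by linarith
    qed
    have notin: "z + w \<notin> M"
    proof
      assume zw: "z + w \<in> M"
      have dpos: "\<delta> / 2 > 0" using \<delta> by simp
      obtain N where N: "\<And>n. n \<ge> N \<Longrightarrow> Ns (Suc p) (a (r1 n) - z) < \<delta> / 2"
        using eventually_lt0[OF rz(4) dpos] by blast
      define a0 where "a0 = a (r1 N)"
      have a0S: "a0 \<in> S" unfolding a0_def by (rule aS)
      have a0q: "a0 \<in> Bs (Suc p)" unfolding a0_def by (rule aq)
      define b0 where "b0 = z + w - a0"
      have b0q: "b0 \<in> Bs (Suc p)" unfolding b0_def by (rule Q.diff_mem[OF Q.add_mem[OF rz(2) r2(2)] a0q])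
      have "b0 = (z - a0) + w" unfolding b0_def by simp
      then have "Ns (Suc p) b0 = Ns (Suc p) ((z - a0) + w)" by (rule arg_cong)
      also have "\<dots> \<le> Ns (Suc p) (z - a0) + Ns (Suc p) w" by (rule Q.tri[OF Q.diff_mem[OF rz(2) a0q] r2(2)])
      also have "Ns (Suc p) (z - a0) = Ns (Suc p) (a0 - z)" by (rule Q.Nsym[OF rz(2) a0q])
      finally have b0le: "Ns (Suc p) b0 \<le> Ns (Suc p) (a0 - z) + Ns (Suc p) w" .
      have "Ns (Suc p) (a0 - z) < \<delta> / 2" unfolding a0_def by (rule N) simp
      then have b0lt: "Ns (Suc p) b0 < \<delta>" using b0le wle by linarith
      have "\<forall>b\<in>Bs (Suc p). Ns (Suc p) b < \<delta> \<longrightarrow> a0 + b \<notin> M" using \<delta>(2) a0S by (rule bspec)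
      then have "Ns (Suc p) b0 < \<delta> \<longrightarrow> a0 + b0 \<notin> M" using b0q by (rule bspec)
      then have "a0 + b0 \<notin> M" using b0lt by (rule mp)
      moreover have "a0 + b0 = z + w" unfolding b0_def by simp
      ultimately show False using zw by simp
    qed
    have sq: "s n \<in> Bs (Suc p)" for n unfolding sab by (rule Q.add_mem[OF aq bq'])
    have zwq: "z + w \<in> Bs (Suc p)" by (rule Q.add_mem[OF rz(2) r2(2)])
    have "(\<lambda>n. Ns (Suc p) (s (r n) - (z + w))) \<longlonglongrightarrow> 0"
    proof (rule squeeze0)
      show "0 \<le> Ns (Suc p) (s (r n) - (z + w))" for n by (rule Q.nonneg[OF Q.diff_mem[OF sq zwq]])
      show "Ns (Suc p) (s (r n) - (z + w)) \<le> Ns (Suc p) (a (r n) - z) + Ns (Suc p) (b (r n) - w)" for n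
      proof -
        have "s (r n) - (z + w) = (a (r n) - z) + (b (r n) - w)" unfolding sab by simp
        then have "Ns (Suc p) (s (r n) - (z + w)) = Ns (Suc p) ((a (r n) - z) + (b (r n) - w))" by (rule arg_cong)
        also have "\<dots> \<le> Ns (Suc p) (a (r n) - z) + Ns (Suc p) (b (r n) - w)"
          by (rule Q.tri[OF Q.diff_mem[OF aq rz(2)] Q.diff_mem[OF bq' r2(2)]])
        finally show ?thesis .
      qed
      show "(\<lambda>n. Ns (Suc p) (a (r n) - z) + Ns (Suc p) (b (r n) - w)) \<longlonglongrightarrow> 0"
        by (rule tendsto_add_zero[OF la lb])
    qed
    then show "\<exists>r z. strict_mono r \<and> z \<in> Bs (Suc p) \<and> z \<notin> M \<and> (\<lambda>n. Ns (Suc p) (s (r n) - z)) \<longlonglongrightarrow> 0"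
      using r notin zwq by (intro exI[of _ r] exI[of _ "z + w"]) simp
  qed
  then show ?thesis using epos by (intro exI[of _ e]) simp
qed

lemma complement_nbhd:
  assumes mc: "mclosed M" and y: "y \<in> Bs m" "y \<notin> M"
  shows "\<exists>V. V \<subseteq> (\<Union>j. Bs j) \<and> absolutely_convex V \<and> (\<forall>j. \<exists>r>0. {x\<in>Bs j. Ns j x < r} \<subseteq> V)
           \<and> (\<forall>v\<in>V. y + v \<notin> M)"
proof -
  define eps where "eps p S = (SOME e. e > 0 \<and> good M (Suc p) (plusball p S e))" for p S
  define W where "W = rec_nat {y} (\<lambda>n S. plusball (m+n) S (eps (m+n) S))"
  have W0: "W 0 = {y}" unfolding W_def by simp
  have WS: "W (Suc n) = plusball (m+n) (W n) (eps (m+n) (W n))" for n unfolding W_def by simp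
  have epsI: "eps p S > 0 \<and> good M (Suc p) (plusball p S (eps p S))" if "good M p S" for p S
    unfolding eps_def by (rule someI_ex[OF step[OF mc that]])
  have gW: "good M (m+n) (W n)" for n
  proof (induction n)
    case 0
    have "good M m {y}"
    proof (rule goodI)
      show "{y} \<subseteq> Bs m" using y(1) by simp
      fix s :: "nat \<Rightarrow> 'a" assume "\<And>n. s n \<in> {y}"
      then have "s n = y" for n by simp
      then show "\<exists>r z. strict_mono r \<and> z \<in> Bs m \<and> z \<notin> M \<and> (\<lambda>n. Ns m (s (r n) - z)) \<longlonglongrightarrow> 0"
        using y by (intro exI[of _ "\<lambda>n. n"] exI[of _ y]) (simp add: strict_mono_def bspace.N0[OF bs])
    qed
    then show ?case using W0 by simp
  next
    case (Suc n)
    show ?case using conjunct2[OF epsI[OF Suc.IH]] WS[of n] by simp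
  qed
  have epos: "eps (m+n) (W n) > 0" for n using conjunct1[OF epsI[OF gW]] .
  have z0: "0 \<in> Bs p" for p by (rule bspace.zero_mem[OF bs])
  have N00: "Ns p 0 = 0" for p by (rule bspace.N0[OF bs])
  have yW: "y \<in> W n" for n
  proof (induction n)
    case 0 show ?case using W0 by simp
  next
    case (Suc n)
    have "y + 0 \<in> plusball (m+n) (W n) (eps (m+n) (W n))"
      unfolding plusball_def mem_Collect_eq
      by (rule exI[of _ y], rule exI[of _ 0]) (simp add: Suc.IH epos z0 N00)
    then show ?case using WS[of n] by simp
  qed
  define D where "D n = {v. y + v \<in> W n}" for n
  have D0: "D 0 = {0}" unfolding D_def W0 by auto
  have DS: "D (Suc n) = {d + b | d b. d \<in> D n \<and> b \<in> {x \<in> Bs (m+n). Ns (m+n) x < eps (m+n) (W n)}}" for n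
  proof (rule set_eqI)
    fix v
    show "v \<in> D (Suc n) \<longleftrightarrow> v \<in> {d + b | d b. d \<in> D n \<and> b \<in> {x \<in> Bs (m+n). Ns (m+n) x < eps (m+n) (W n)}}"
    proof
      assume "v \<in> D (Suc n)"
      then have "y + v \<in> plusball (m+n) (W n) (eps (m+n) (W n))" unfolding D_def WS by simp
      then obtain a b where ab: "y + v = a + b" "a \<in> W n" "b \<in> Bs (m+n)" "Ns (m+n) b < eps (m+n) (W n)"
        unfolding plusball_def by blast
      have "a - y \<in> D n" unfolding D_def using ab(2) by simp
      moreover have "v = (a - y) + b" using ab(1) by (simp add: algebra_simps)
      ultimately show "v \<in> {d + b | d b. d \<in> D n \<and> b \<in> {x \<in> Bs (m+n). Ns (m+n) x < eps (m+n) (W n)}}"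
        using ab(3,4) by blast
    next
      assume "v \<in> {d + b | d b. d \<in> D n \<and> b \<in> {x \<in> Bs (m+n). Ns (m+n) x < eps (m+n) (W n)}}"
      then obtain d b where db: "v = d + b" "d \<in> D n" "b \<in> Bs (m+n)" "Ns (m+n) b < eps (m+n) (W n)" by blast
      have "y + v = (y + d) + b" using db(1) by (simp add: algebra_simps)
      moreover have "y + d \<in> W n" using db(2) unfolding D_def by simp
      ultimately have "y + v \<in> plusball (m+n) (W n) (eps (m+n) (W n))"
        unfolding plusball_def using db(3,4) by blast
      then show "v \<in> D (Suc n)" unfolding D_def WS by simp
    qed
  qed
  have acD: "absolutely_convex (D n)" for n
  proof (induction n)
    case 0 show ?case unfolding absolutely_convex_def D0 by simp
  next
    case (Suc n) show ?case unfolding DS by (rule ac_sum[OF Suc.IH bspace.ball_ac[OF bs]])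
  qed
  have D0n: "0 \<in> D n" for n unfolding D_def using yW by simp
  have Dball: "{x \<in> Bs (m+n). Ns (m+n) x < eps (m+n) (W n)} \<subseteq> D (Suc n)" for n
  proof
    fix x assume x: "x \<in> {x \<in> Bs (m+n). Ns (m+n) x < eps (m+n) (W n)}"
    show "x \<in> D (Suc n)" unfolding DS mem_Collect_eq
      by (rule exI[of _ 0], rule exI[of _ x]) (use x D0n in simp)
  qed
  have Dmono: "D n \<subseteq> D (Suc n)" for n
  proof
    fix x assume x: "x \<in> D n"
    show "x \<in> D (Suc n)" unfolding DS mem_Collect_eq
      by (rule exI[of _ x], rule exI[of _ 0]) (simp add: x z0 N00 epos)
  qed
  have Dmono': "D i \<subseteq> D k" if "i \<le> k" for i k using lift_Suc_mono_le[of D, OF Dmono that] .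
  define V where "V = (\<Union>n. D n)"
  have "V \<subseteq> (\<Union>j. Bs j)"
  proof
    fix v assume "v \<in> V"
    then obtain n where v: "v \<in> D n" unfolding V_def by blast
    have "y + v \<in> W n" using v unfolding D_def by simp
    then have yv: "y + v \<in> Bs (m+n)" using good_sub[OF gW[of n]] by (rule subsetD[rotated])
    have ym: "y \<in> Bs (m+n)" using y(1) mono_sub[of m "m+n"] by auto
    have "v = (y + v) - y" by simp
    then have "v \<in> Bs (m+n)" using bspace.diff_mem[OF bs yv ym] by simp
    then show "v \<in> (\<Union>j. Bs j)" by blast
  qed
  moreover have "absolutely_convex V"
  proof -
    have cv: "convex V" unfolding convex_def
    proof (intro ballI allI impI)
      fix x z and u v :: real
      assume x: "x \<in> V" and z: "z \<in> V" and u: "0 \<le> u" and v: "0 \<le> v" and uv: "u + v = 1"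
      obtain i where i: "x \<in> D i" using x unfolding V_def by blast
      obtain k where k: "z \<in> D k" using z unfolding V_def by blast
      have xm: "x \<in> D (max i k)" using i Dmono'[of i "max i k"] by auto
      have zm: "z \<in> D (max i k)" using k Dmono'[of k "max i k"] by auto
      have "convex (D (max i k))" using acD[of "max i k"] unfolding absolutely_convex_def by (rule conjunct1)
      then have "u *\<^sub>R x + v *\<^sub>R z \<in> D (max i k)" using xm zm u v uv unfolding convex_def by blast
      then show "u *\<^sub>R x + v *\<^sub>R z \<in> V" unfolding V_def by blast
    qed
    have "c *\<^sub>R x \<in> V" if x: "x \<in> V" and c: "\<bar>c\<bar> \<le> 1" for x and c :: real
    proof -
      obtain i where i: "x \<in> D i" using x unfolding V_def by blast
      have "\<forall>x\<in>D i. \<forall>c. \<bar>c\<bar> \<le> 1 \<longrightarrow> c *\<^sub>R x \<in> D i" using acD[of i] unfolding absolutely_convex_def by (rule conjunct2)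
      then have "c *\<^sub>R x \<in> D i" using i c by blast
      then show ?thesis unfolding V_def by blast
    qed
    then show ?thesis unfolding absolutely_convex_def using cv by simp
  qed
  moreover have "\<forall>j. \<exists>r>0. {x\<in>Bs j. Ns j x < r} \<subseteq> V"
  proof
    fix j
    show "\<exists>r>0. {x\<in>Bs j. Ns j x < r} \<subseteq> V"
    proof (cases "m \<le> j")
      case True
      define n where "n = j - m"
      have jn: "j = m + n" using True unfolding n_def by simp
      have "{x\<in>Bs j. Ns j x < eps j (W n)} \<subseteq> D (Suc n)" unfolding jn by (rule Dball)
      moreover have "eps j (W n) > 0" unfolding jn by (rule epos)
      ultimately show ?thesis unfolding V_def by blast
    next
      case False
      then have jm: "j \<le> m" by simp
      obtain c where c: "c > 0" "\<forall>x\<in>Bs j. Ns m x \<le> c * Ns j x" using boundjk[OF jm] by (elim exE conjE)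
      have e0: "eps m (W 0) > 0" using epos[of 0] by simp
      have "{x\<in>Bs j. Ns j x < eps m (W 0) / c} \<subseteq> D (Suc 0)"
      proof
        fix x assume x: "x \<in> {x\<in>Bs j. Ns j x < eps m (W 0) / c}"
        have xm: "x \<in> Bs m" using x mono_sub[OF jm] by auto
        have "Ns m x \<le> c * Ns j x" using c(2) x by simp
        also have "\<dots> < c * (eps m (W 0) / c)"
        proof -
          have "Ns j x < eps m (W 0) / c" using x by simp
          then show ?thesis using c(1) by (rule mult_strict_left_mono)
        qed
        also have "\<dots> = eps m (W 0)" using c(1) by simp
        finally have "x \<in> {x \<in> Bs (m+0). Ns (m+0) x < eps (m+0) (W 0)}" using xm by simp
        then show "x \<in> D (Suc 0)" using Dball[of 0] by (rule subsetD[rotated])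
      qed
      moreover have "eps m (W 0) / c > 0" using e0 c(1) by simp
      ultimately show ?thesis unfolding V_def by blast
    qed
  qed
  moreover have "\<forall>v\<in>V. y + v \<notin> M"
  proof
    fix v assume "v \<in> V"
    then obtain n where v: "v \<in> D n" unfolding V_def by blast
    have "y + v \<in> W n" using v unfolding D_def by simp
    then show "y + v \<notin> M" by (rule good_not_in[OF gW])
  qed
  ultimately show ?thesis by (intro exI[of _ V]) simp
qed

end

lemma const_le0: fixes g :: "nat \<Rightarrow> real"
  assumes "0 \<le> c" "\<And>n. c \<le> g n" "g \<longlonglongrightarrow> 0" shows "c = 0"
proof -
  have "c \<le> 0" using LIMSEQ_le_const[OF assms(3)] assms(2) by blast
  then show ?thesis using assms(1) by simp
qed

context bspace begin

lemma lim_unique: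
  assumes f: "\<And>n::nat. f n \<in> B" and ab: "a \<in> B" "b \<in> B"
    and la: "(\<lambda>n. N (f n - a)) \<longlonglongrightarrow> 0" and lb: "(\<lambda>n. N (f n - b)) \<longlonglongrightarrow> 0"
  shows "a = b"
proof -
  have "N (a - b) = 0"
  proof (rule const_le0)
    show "0 \<le> N (a - b)" by (rule nonneg[OF diff_mem[OF ab]])
    show "N (a - b) \<le> N (f n - a) + N (f n - b)" for n
    proof -
      have "N (a - b) \<le> N (a - f n) + N (f n - b)" by (rule Ntri[OF ab(1) f ab(2)])
      moreover have "N (a - f n) = N (f n - a)" by (rule Nsym[OF ab(1) f])
      ultimately show ?thesis by simp
    qed
    show "(\<lambda>n. N (f n - a) + N (f n - b)) \<longlonglongrightarrow> 0" by (rule tendsto_add_zero[OF la lb])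
  qed
  then have "a - b = 0" by (rule zero_imp[OF diff_mem[OF ab]])
  then show ?thesis by simp
qed

lemma conv_cauchy:
  assumes f: "\<And>n::nat. f n \<in> B" and l: "l \<in> B" and lim: "(\<lambda>n. N (f n - l)) \<longlonglongrightarrow> 0" and e: "e > 0"
  shows "\<exists>M. \<forall>m\<ge>M. \<forall>n\<ge>M. N (f m - f n) < e"
proof -
  have e2: "e / 2 > 0" using e by simp
  obtain M where M: "\<And>n. n \<ge> M \<Longrightarrow> N (f n - l) < e / 2" using eventually_lt0[OF lim e2] by blast
  have "N (f m - f n) < e" if "m \<ge> M" "n \<ge> M" for m n
  proof -
    have "N (f m - f n) \<le> N (f m - l) + N (l - f n)" by (rule Ntri[OF f l f])
    moreover have "N (l - f n) = N (f n - l)" by (rule Nsym[OF l f])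
    moreover have "N (f m - l) < e / 2" by (rule M[OF that(1)])
    moreover have "N (f n - l) < e / 2" by (rule M[OF that(2)])
    ultimately show ?thesis by linarith
  qed
  then show ?thesis by blast
qed

lemma mcomplete: "Metric_space.mcomplete B nd"
  unfolding Metric_space.mcomplete_def[OF metric]
proof (intro allI impI)
  fix \<sigma> :: "nat \<Rightarrow> 'a" assume c: "Metric_space.MCauchy B nd \<sigma>"
  have rB: "range \<sigma> \<subseteq> B" and cc: "\<forall>e>0. \<exists>M. \<forall>n n'. M \<le> n \<longrightarrow> M \<le> n' \<longrightarrow> nd (\<sigma> n) (\<sigma> n') < e"
    using c unfolding Metric_space.MCauchy_def[OF metric] by simp_all
  have sB: "\<sigma> n \<in> B" for n using rB by blast
  have cau: "\<exists>M. \<forall>m\<ge>M. \<forall>n\<ge>M. N (\<sigma> m - \<sigma> n) < e" if e: "e > 0" for e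
  proof -
    obtain M where "\<forall>n n'. M \<le> n \<longrightarrow> M \<le> n' \<longrightarrow> nd (\<sigma> n) (\<sigma> n') < e" using cc e by blast
    then show ?thesis using sB unfolding nd_def by auto
  qed
  have "\<exists>l\<in>B. (\<lambda>n. N (\<sigma> n - l)) \<longlonglongrightarrow> 0" by (rule complete[of \<sigma>, OF sB cau])
  then obtain l where l: "l \<in> B" "(\<lambda>n. N (\<sigma> n - l)) \<longlonglongrightarrow> 0" by blast
  have "limitin (norm_topology B N) \<sigma> l sequentially" using l limitin_iff[OF sB] by simp
  then show "\<exists>x. limitin (Metric_space.mtopology B nd) \<sigma> x sequentially" unfolding ntop by blast
qed

end

locale cr =
  fixes X :: "'a::real_vector set" and NX and Y :: "'b::real_vector set" and NY and T :: "'a \<Rightarrow> 'b"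
    and Ej :: "nat \<Rightarrow> 'a set" and NE
  assumes bX: "bspace X NX" and bY: "bspace Y NY" and dE: "dfs Ej NE"
    and Tadd: "\<And>x y. x\<in>X \<Longrightarrow> y\<in>X \<Longrightarrow> T (x + y) = T x + T y"
    and Tscale: "\<And>c x. x\<in>X \<Longrightarrow> T (c *\<^sub>R x) = c *\<^sub>R T x"
    and graph: "\<And>s u v. (\<And>n::nat. s n \<in> X) \<Longrightarrow> (\<And>n. T (s n) \<in> Y) \<Longrightarrow> u \<in> X \<Longrightarrow> v \<in> Y \<Longrightarrow>
        (\<lambda>n. NX (s n - u)) \<longlonglongrightarrow> 0 \<Longrightarrow> (\<lambda>n. NY (T (s n) - v)) \<longlonglongrightarrow> 0 \<Longrightarrow> T u = v"
    and EX: "\<And>j. Ej j \<subseteq> X"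
    and cont: "\<And>j s l. (\<And>n::nat. s n \<in> Ej j) \<Longrightarrow> l \<in> Ej j \<Longrightarrow> (\<lambda>n. NE j (s n - l)) \<longlonglongrightarrow> 0 \<Longrightarrow>
        (\<lambda>n. NX (s n - l)) \<longlonglongrightarrow> 0"
    and H: "\<And>u. u \<in> X \<Longrightarrow> T u \<in> Y \<Longrightarrow> u \<in> (\<Union>j. Ej j)"
begin

sublocale XX: bspace X NX by (rule bX)
sublocale YY: bspace Y NY by (rule bY)
sublocale EE: dfs Ej NE by (rule dE)

lemma T0: "T 0 = 0" using Tscale[of 0 0] by simp

lemma Tdiff: "x \<in> X \<Longrightarrow> y \<in> X \<Longrightarrow> T (x - y) = T x - T y"
proof -
  assume xy: "x \<in> X" "y \<in> X"
  have a: "T (x + (-1) *\<^sub>R y) = T x + (-1) *\<^sub>R T y"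
    using Tadd[OF xy(1) XX.scale_mem[OF xy(2)], of "-1"] Tscale[OF xy(2), of "-1"] by (simp only:)
  then show ?thesis by simp
qed

definition G where "G = {u\<in>X. T u \<in> Y}"
definition nG where "nG u = NX u + NY (T u)"

lemma G_X: "u \<in> G \<Longrightarrow> u \<in> X" unfolding G_def by simp
lemma G_Y: "u \<in> G \<Longrightarrow> T u \<in> Y" unfolding G_def by simp
lemma GI: "u \<in> X \<Longrightarrow> T u \<in> Y \<Longrightarrow> u \<in> G" unfolding G_def by simp

lemma G_add: "u \<in> G \<Longrightarrow> v \<in> G \<Longrightarrow> u + v \<in> G"
  by (rule GI) (simp_all add: XX.add_mem G_X Tadd YY.add_mem G_Y)
lemma G_scale: "u \<in> G \<Longrightarrow> c *\<^sub>R u \<in> G"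
  by (rule GI) (simp_all add: XX.scale_mem G_X Tscale YY.scale_mem G_Y)
lemma G_diff: "u \<in> G \<Longrightarrow> v \<in> G \<Longrightarrow> u - v \<in> G"
  by (rule GI) (simp_all add: XX.diff_mem G_X Tdiff YY.diff_mem G_Y)
lemma G_0: "0 \<in> G" by (rule GI) (simp_all add: T0)

lemma NX_le: "u \<in> G \<Longrightarrow> NX u \<le> nG u" unfolding nG_def using YY.nonneg G_Y by simp
lemma NY_le: "u \<in> G \<Longrightarrow> NY (T u) \<le> nG u" unfolding nG_def using XX.nonneg G_X by simp

lemma bG: "banach_on G nG"
  unfolding banach_on_def
proof (intro conjI)
  show "subspace G" unfolding subspace_def using G_0 G_add G_scale by blast
  show "\<forall>x\<in>G. 0 \<le> nG x" unfolding nG_def using XX.nonneg YY.nonneg G_X G_Y by (simp add: add_nonneg_nonneg)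
  show "\<forall>x\<in>G. nG x = 0 \<longrightarrow> x = 0"
  proof (intro ballI impI)
    fix x assume x: "x \<in> G" "nG x = 0"
    have "NX x = 0" using x XX.nonneg[OF G_X] YY.nonneg[OF G_Y] unfolding nG_def by (smt (verit))
    then show "x = 0" using XX.zero_imp G_X x(1) by blast
  qed
  show "\<forall>x\<in>G. \<forall>y\<in>G. nG (x + y) \<le> nG x + nG y"
  proof (intro ballI)
    fix x y assume xy: "x \<in> G" "y \<in> G"
    have "NX (x + y) \<le> NX x + NX y" by (rule XX.tri[OF G_X[OF xy(1)] G_X[OF xy(2)]])
    moreover have "NY (T (x + y)) \<le> NY (T x) + NY (T y)"
      using YY.tri[OF G_Y[OF xy(1)] G_Y[OF xy(2)]] Tadd[OF G_X[OF xy(1)] G_X[OF xy(2)]] by simp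
    ultimately show "nG (x + y) \<le> nG x + nG y" unfolding nG_def by simp
  qed
  show "\<forall>c. \<forall>x\<in>G. nG (c *\<^sub>R x) = \<bar>c\<bar> * nG x"
  proof (intro allI ballI)
    fix c x assume x: "x \<in> G"
    show "nG (c *\<^sub>R x) = \<bar>c\<bar> * nG x"
      unfolding nG_def using XX.scale[OF G_X[OF x]] YY.scale[OF G_Y[OF x]] Tscale[OF G_X[OF x]]
      by (simp add: distrib_left)
  qed
  show "\<forall>u::nat \<Rightarrow> 'a. (\<forall>n. u n \<in> G) \<and> (\<forall>e>0. \<exists>M. \<forall>m\<ge>M. \<forall>n\<ge>M. nG (u m - u n) < e)
        \<longrightarrow> (\<exists>l\<in>G. (\<lambda>n. nG (u n - l)) \<longlonglongrightarrow> 0)"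
  proof (intro allI impI)
    fix u :: "nat \<Rightarrow> 'a"
    assume a: "(\<forall>n. u n \<in> G) \<and> (\<forall>e>0. \<exists>M. \<forall>m\<ge>M. \<forall>n\<ge>M. nG (u m - u n) < e)"
    have uG: "u n \<in> G" for n using a by simp
    have cau: "\<exists>M. \<forall>m\<ge>M. \<forall>n\<ge>M. nG (u m - u n) < e" if "e > 0" for e using a that by simp
    have uX: "u n \<in> X" for n by (rule G_X[OF uG])
    have uY: "T (u n) \<in> Y" for n by (rule G_Y[OF uG])
    have cX: "\<exists>M. \<forall>m\<ge>M. \<forall>n\<ge>M. NX (u m - u n) < e" if e: "e > 0" for e
    proof -
      obtain M where M: "\<forall>m\<ge>M. \<forall>n\<ge>M. nG (u m - u n) < e" using cau[OF e] by blast
      have "NX (u m - u n) < e" if "m \<ge> M" "n \<ge> M" for m n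
        using NX_le[OF G_diff[OF uG uG], of m n] M that by fastforce
      then show ?thesis by blast
    qed
    have "\<exists>l\<in>X. (\<lambda>n. NX (u n - l)) \<longlonglongrightarrow> 0" by (rule XX.complete[of u, OF uX cX])
    then obtain l where l: "l \<in> X" "(\<lambda>n. NX (u n - l)) \<longlonglongrightarrow> 0" by blast
    have cY: "\<exists>M. \<forall>m\<ge>M. \<forall>n\<ge>M. NY (T (u m) - T (u n)) < e" if e: "e > 0" for e
    proof -
      obtain M where M: "\<forall>m\<ge>M. \<forall>n\<ge>M. nG (u m - u n) < e" using cau[OF e] by blast
      have "NY (T (u m) - T (u n)) < e" if "m \<ge> M" "n \<ge> M" for m n
        using NY_le[OF G_diff[OF uG uG], of m n] M that Tdiff[OF uX uX, of m n] by fastforce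
      then show ?thesis by blast
    qed
    have "\<exists>v\<in>Y. (\<lambda>n. NY (T (u n) - v)) \<longlonglongrightarrow> 0" by (rule YY.complete[of "\<lambda>n. T (u n)", OF uY cY])
    then obtain v where v: "v \<in> Y" "(\<lambda>n. NY (T (u n) - v)) \<longlonglongrightarrow> 0" by blast
    have Tl: "T l = v" by (rule graph[OF uX uY l(1) v(1) l(2) v(2)])
    have lG: "l \<in> G" using l(1) v(1) Tl by (simp add: GI)
    have "(\<lambda>n. nG (u n - l)) = (\<lambda>n. NX (u n - l) + NY (T (u n) - v))"
      unfolding nG_def using Tdiff[OF uX l(1)] Tl by simp
    then have "(\<lambda>n. nG (u n - l)) \<longlonglongrightarrow> 0" using tendsto_add_zero[OF l(2) v(2)] by simp
    then show "\<exists>l\<in>G. (\<lambda>n. nG (u n - l)) \<longlonglongrightarrow> 0" using lG by blast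
  qed
qed

sublocale GG: bspace G nG by (unfold_locales) (rule bG)

end

context cr begin

definition A where "A j m = {u\<in>G. \<exists>z\<in>EE.K j. u = real m *\<^sub>R z}"

lemma A_sub: "A j m \<subseteq> G" unfolding A_def by blast

lemma Kbound: "\<exists>\<beta>>0. \<forall>x\<in>EE.K j. NE (Suc j) x \<le> \<beta>"
proof -
  interpret S: bspace "Ej (Suc j)" "NE (Suc j)" by (rule EE.bs)
  have "Metric_space.mbounded (Ej (Suc j)) S.nd (EE.K j)"
    using Metric_space.compactin_imp_mbounded[OF S.metric EE.cptK] .
  then obtain Bd where Bd: "Bd > 0" "\<forall>x\<in>EE.K j. \<forall>y\<in>EE.K j. S.nd x y \<le> Bd"
    unfolding Metric_space.mbounded_alt_pos[OF S.metric] by blast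
  have "0 \<in> {x\<in>Ej j. NE j x \<le> 1}" using bspace.zero_mem[OF EE.bs, of j] bspace.N0[OF EE.bs, of j] by simp
  then have zK: "0 \<in> EE.K j" using EE.ballK[of j] by (rule subsetD[rotated])
  have "NE (Suc j) x \<le> Bd" if x: "x \<in> EE.K j" for x
  proof -
    have "S.nd x 0 \<le> Bd" using Bd(2) x zK by blast
    moreover have "x \<in> Ej (Suc j)" using x EE.K_sub by blast
    ultimately show ?thesis unfolding S.nd_def by simp
  qed
  then show ?thesis using Bd(1) by blast
qed

lemma A_closed: "closedin (Metric_space.mtopology G GG.nd) (A j m)"
proof -
  interpret S: bspace "Ej (Suc j)" "NE (Suc j)" by (rule EE.bs)
  show ?thesis unfolding Metric_space.metric_closedin_iff_sequentially_closed[OF GG.metric]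
  proof (intro conjI allI impI)
    show "A j m \<subseteq> G" by (rule A_sub)
    fix \<sigma> :: "nat \<Rightarrow> 'a" and l
    assume a: "range \<sigma> \<subseteq> A j m \<and> limitin (Metric_space.mtopology G GG.nd) \<sigma> l sequentially"
    have \<sigma>A: "\<sigma> n \<in> A j m" for n using a by blast
    have \<sigma>G: "\<sigma> n \<in> G" for n using \<sigma>A A_sub by blast
    have "limitin (norm_topology G nG) \<sigma> l sequentially" using a unfolding GG.ntop by simp
    then have lim: "l \<in> G" "(\<lambda>n. nG (\<sigma> n - l)) \<longlonglongrightarrow> 0" using GG.limitin_iff[OF \<sigma>G] by simp_all
    have h: "\<forall>n. \<exists>z. z \<in> EE.K j \<and> \<sigma> n = real m *\<^sub>R z" using \<sigma>A unfolding A_def by blast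
    obtain z where z: "\<forall>n. z n \<in> EE.K j \<and> \<sigma> n = real m *\<^sub>R z n" by (rule exE[OF choice[OF h]])
    have zK: "z n \<in> EE.K j" and \<sigma>z: "\<sigma> n = real m *\<^sub>R z n" for n using spec[OF z, of n] by simp_all
    have allseq: "\<forall>\<sigma>::nat\<Rightarrow>'a. range \<sigma> \<subseteq> EE.K j
         \<longrightarrow> (\<exists>l r. l \<in> EE.K j \<and> strict_mono r \<and> limitin (Metric_space.mtopology (Ej (Suc j)) S.nd) (\<sigma> \<circ> r) l sequentially)"
      using EE.cptK[of j] unfolding Metric_space.compactin_sequentially[OF S.metric] by (rule conjunct2)
    have "range z \<subseteq> EE.K j" using zK by blast
    then have "\<exists>l r. l \<in> EE.K j \<and> strict_mono r \<and> limitin (Metric_space.mtopology (Ej (Suc j)) S.nd) (z \<circ> r) l sequentially"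
      using spec[OF allseq, of z] by (rule mp[rotated])
    then obtain l' r where lr: "l' \<in> EE.K j" "strict_mono r"
        "limitin (Metric_space.mtopology (Ej (Suc j)) S.nd) (z \<circ> r) l' sequentially" by blast
    have zS: "(z \<circ> r) n \<in> Ej (Suc j)" for n using zK EE.K_sub by auto
    have "limitin (norm_topology (Ej (Suc j)) (NE (Suc j))) (z \<circ> r) l' sequentially" using lr(3) unfolding S.ntop by simp
    then have lz: "l' \<in> Ej (Suc j)" "(\<lambda>n. NE (Suc j) ((z \<circ> r) n - l')) \<longlonglongrightarrow> 0"
      using S.limitin_iff[OF zS] by simp_all
    have \<sigma>S: "\<sigma> (r n) \<in> Ej (Suc j)" for n unfolding \<sigma>z using S.scale_mem zS by simp
    have ml: "real m *\<^sub>R l' \<in> Ej (Suc j)" by (rule S.scale_mem[OF lz(1)])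
    have eqn: "NE (Suc j) (\<sigma> (r n) - real m *\<^sub>R l') = real m * NE (Suc j) ((z \<circ> r) n - l')" for n
    proof -
      have "\<sigma> (r n) - real m *\<^sub>R l' = real m *\<^sub>R ((z \<circ> r) n - l')" unfolding \<sigma>z by (simp add: scaleR_diff_right)
      then show ?thesis using S.scale[OF S.diff_mem[OF zS lz(1)], of "real m"] by simp
    qed
    have "(\<lambda>n. NE (Suc j) (\<sigma> (r n) - real m *\<^sub>R l')) \<longlonglongrightarrow> 0"
      unfolding eqn by (rule cmult0[OF lz(2)])
    then have l1: "(\<lambda>n. NX (\<sigma> (r n) - real m *\<^sub>R l')) \<longlonglongrightarrow> 0"
      by (rule cont[where j="Suc j" and s="\<lambda>n. \<sigma> (r n)", OF \<sigma>S ml])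
    have "(\<lambda>n. NX (\<sigma> n - l)) \<longlonglongrightarrow> 0"
    proof (rule squeeze0)
      show "0 \<le> NX (\<sigma> n - l)" for n by (rule XX.nonneg[OF G_X[OF G_diff[OF \<sigma>G lim(1)]]])
      show "NX (\<sigma> n - l) \<le> nG (\<sigma> n - l)" for n by (rule NX_le[OF G_diff[OF \<sigma>G lim(1)]])
      show "(\<lambda>n. nG (\<sigma> n - l)) \<longlonglongrightarrow> 0" by (rule lim(2))
    qed
    then have l2: "(\<lambda>n. NX (\<sigma> (r n) - l)) \<longlonglongrightarrow> 0"
      using LIMSEQ_subseq_LIMSEQ[OF _ lr(2)] unfolding comp_def by blast
    have "l = real m *\<^sub>R l'"
      by (rule XX.lim_unique[of "\<lambda>n. \<sigma> (r n)", OF G_X[OF \<sigma>G] G_X[OF lim(1)] _ l2 l1])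
         (use ml EX in blast)
    then show "l \<in> A j m" unfolding A_def using lim(1) lr(1) by blast
  qed
qed

lemma cover: "G = (\<Union>(j, m). A j m)"
proof
  show "(\<Union>(j, m). A j m) \<subseteq> G"
  proof
    fix x assume "x \<in> (\<Union>(j, m). A j m)"
    then obtain j m where "x \<in> A j m" by blast
    then show "x \<in> G" using A_sub[of j m] by (rule subsetD[rotated])
  qed
  show "G \<subseteq> (\<Union>(j, m). A j m)"
  proof
    fix u assume uG: "u \<in> G"
    obtain j where uj: "u \<in> Ej j" using H[OF G_X[OF uG] G_Y[OF uG]] by blast
    interpret J: bspace "Ej j" "NE j" by (rule EE.bs)
    define m where "m = nat \<lceil>NE j u\<rceil> + 1"
    have mpos: "real m > 0" unfolding m_def by simp
    have mge: "NE j u \<le> real m" unfolding m_def by linarith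
    define z where "z = (1 / real m) *\<^sub>R u"
    have zj: "z \<in> Ej j" unfolding z_def by (rule J.scale_mem[OF uj])
    have "NE j z = NE j u / real m" unfolding z_def using J.scale[OF uj] mpos by simp
    also have "\<dots> \<le> 1" using mge mpos by simp
    finally have "z \<in> {x\<in>Ej j. NE j x \<le> 1}" using zj by simp
    then have zK: "z \<in> EE.K j" using EE.ballK[of j] by (rule subsetD[rotated])
    have "u = real m *\<^sub>R z" unfolding z_def using mpos by simp
    then have "u \<in> A j m" unfolding A_def using uG zK by blast
    then show "u \<in> (\<Union>(j, m). A j m)" by blast
  qed
qed

lemma est: "\<exists>j C. 0 \<le> C \<and> (\<forall>u\<in>G. u \<in> Ej j \<and> NE j u \<le> C * nG u)"
proof -
  let ?M = "Metric_space.mtopology G GG.nd"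
  have "\<exists>j m. ?M interior_of A j m \<noteq> {}"
  proof (rule ccontr)
    assume "\<not> (\<exists>j m. ?M interior_of A j m \<noteq> {})"
    then have e: "?M interior_of A j m = {}" for j m by blast
    have "?M interior_of \<Union>(range (\<lambda>(j, m). A j m)) = {}"
    proof (rule Metric_space.metric_Baire_category_alt[OF GG.metric GG.mcomplete])
      show "countable (range (\<lambda>(j, m). A j m))" by simp
      fix S assume "S \<in> range (\<lambda>(j, m). A j m)"
      then obtain j m where "S = A j m" by auto
      then show "closedin ?M S \<and> ?M interior_of S = {}" using A_closed e by simp
    qed
    moreover have "\<Union>(range (\<lambda>(j, m). A j m)) = G" using cover by simp
    moreover have "?M interior_of G = G"
      using interior_of_topspace[of ?M] unfolding Metric_space.topspace_mtopology[OF GG.metric] .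
    ultimately show False using G_0 by simp
  qed
  then obtain j m where "?M interior_of A j m \<noteq> {}" by blast
  then obtain u0 where u0: "u0 \<in> ?M interior_of A j m" by blast
  have "openin ?M (?M interior_of A j m)" by simp
  then have "\<forall>x. x \<in> ?M interior_of A j m \<longrightarrow> (\<exists>r>0. Metric_space.mball G GG.nd x r \<subseteq> ?M interior_of A j m)"
    unfolding Metric_space.openin_mtopology[OF GG.metric] by (rule conjunct2)
  then obtain \<rho> where \<rho>: "\<rho> > 0" "Metric_space.mball G GG.nd u0 \<rho> \<subseteq> ?M interior_of A j m"
    using u0 by blast
  have ballA: "Metric_space.mball G GG.nd u0 \<rho> \<subseteq> A j m" using \<rho>(2) interior_of_subset[of ?M "A j m"] by (rule order_trans)
  have "u0 \<in> A j m" using u0 interior_of_subset[of ?M "A j m"] by (rule subsetD[rotated])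
  then have u0G: "u0 \<in> G" using A_sub[of j m] by (rule subsetD[rotated])
  interpret S: bspace "Ej (Suc j)" "NE (Suc j)" by (rule EE.bs)
  obtain \<beta> where \<beta>: "\<beta> > 0" "\<forall>x\<in>EE.K j. NE (Suc j) x \<le> \<beta>" using Kbound[of j] by blast
  have inA: "v \<in> A j m" if "v \<in> G" "nG (u0 - v) < \<rho>" for v
  proof -
    have "v \<in> Metric_space.mball G GG.nd u0 \<rho>"
      unfolding Metric_space.in_mball[OF GG.metric] GG.nd_def using that u0G by simp
    then show ?thesis using ballA by blast
  qed
  have key: "h \<in> Ej (Suc j) \<and> NE (Suc j) h \<le> 2 * real m * \<beta>" if h: "h \<in> G" "nG h < \<rho>" for h
  proof -
    have "u0 + h \<in> A j m"
    proof (rule inA)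
      show "u0 + h \<in> G" by (rule G_add[OF u0G h(1)])
      have "nG (u0 - (u0 + h)) = nG (- h)" by simp
      also have "\<dots> = nG h" by (rule GG.Nneg[OF h(1)])
      finally show "nG (u0 - (u0 + h)) < \<rho>" using h(2) by simp
    qed
    then obtain z1 where z1: "z1 \<in> EE.K j" "u0 + h = real m *\<^sub>R z1" unfolding A_def by blast
    have "u0 \<in> A j m" by (rule inA[OF u0G]) (simp add: \<rho>(1))
    then obtain z2 where z2: "z2 \<in> EE.K j" "u0 = real m *\<^sub>R z2" unfolding A_def by blast
    have z1S: "z1 \<in> Ej (Suc j)" and z2S: "z2 \<in> Ej (Suc j)" using z1(1) z2(1) EE.K_sub by blast+
    have heq: "h = real m *\<^sub>R (z1 - z2)" using z1(2) z2(2) by (simp add: scaleR_diff_right algebra_simps)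
    have hS: "h \<in> Ej (Suc j)" unfolding heq by (rule S.scale_mem[OF S.diff_mem[OF z1S z2S]])
    have "NE (Suc j) h = real m * NE (Suc j) (z1 - z2)" unfolding heq using S.scale[OF S.diff_mem[OF z1S z2S]] by simp
    also have "\<dots> \<le> real m * (NE (Suc j) z1 + NE (Suc j) z2)"
      by (rule mult_left_mono[OF S.Ntri3[OF z1S z2S]]) simp
    also have "\<dots> \<le> real m * (\<beta> + \<beta>)"
      using \<beta>(2) z1(1) z2(1) by (intro mult_left_mono add_mono) auto
    finally show ?thesis using hS by simp
  qed
  define C where "C = 4 * real m * \<beta> / \<rho>"
  have C0: "0 \<le> C" unfolding C_def using \<beta>(1) \<rho>(1) by simp
  have "u \<in> Ej (Suc j) \<and> NE (Suc j) u \<le> C * nG u" if uG: "u \<in> G" for u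
  proof (cases "nG u = 0")
    case True
    then have "u = 0" by (rule GG.zero_imp[OF uG])
    then show ?thesis by simp
  next
    case False
    then have npos: "nG u > 0" using GG.nonneg[OF uG] by simp
    define t where "t = \<rho> / (2 * nG u)"
    have tpos: "t > 0" unfolding t_def using npos \<rho>(1) by simp
    have htG: "t *\<^sub>R u \<in> G" by (rule G_scale[OF uG])
    have "nG (t *\<^sub>R u) = t * nG u" using GG.scale[OF uG] tpos by simp
    also have "\<dots> = \<rho> / 2" unfolding t_def using npos by simp
    finally have "nG (t *\<^sub>R u) < \<rho>" using \<rho>(1) by simp
    then have k: "t *\<^sub>R u \<in> Ej (Suc j)" "NE (Suc j) (t *\<^sub>R u) \<le> 2 * real m * \<beta>" using key[OF htG] by simp_all
    have ueq: "u = (1 / t) *\<^sub>R (t *\<^sub>R u)" using tpos by simp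
    have uS: "u \<in> Ej (Suc j)" by (subst ueq) (rule S.scale_mem[OF k(1)])
    have "NE (Suc j) (t *\<^sub>R u) = t * NE (Suc j) u" using S.scale[OF uS, of t] tpos by simp
    then have "NE (Suc j) u = (1 / t) * NE (Suc j) (t *\<^sub>R u)" using tpos by (simp add: field_simps)
    also have "\<dots> \<le> (1 / t) * (2 * real m * \<beta>)" using k(2) tpos by (intro mult_left_mono) simp_all
    also have "\<dots> = C * nG u" unfolding C_def t_def using npos \<rho>(1) by (simp add: field_simps)
    finally show ?thesis using uS by simp
  qed
  then show ?thesis using C0 by blast
qed

end

context cr begin

lemma bounded_conv:
  fixes w :: "nat \<Rightarrow> 'a"
  assumes wG: "\<And>n. w n \<in> G" and wR: "\<And>n. nG (w n) \<le> R" and y: "y \<in> Y" and ly: "(\<lambda>n. NY (T (w n) - y)) \<longlonglongrightarrow> 0"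
  shows "\<exists>r w0. strict_mono r \<and> w0 \<in> G \<and> T w0 = y \<and> (\<lambda>n. nG (w (r n) - w0)) \<longlonglongrightarrow> 0"
proof -
  obtain j C where jC: "0 \<le> C" "\<forall>u\<in>G. u \<in> Ej j \<and> NE j u \<le> C * nG u" using est by blast
  have wE: "w n \<in> Ej j" for n using jC(2) wG by blast
  have wb: "NE j (w n) \<le> C * R" for n
  proof -
    have "NE j (w n) \<le> C * nG (w n)" using jC(2) wG by blast
    also have "\<dots> \<le> C * R" by (rule mult_left_mono[OF wR jC(1)])
    finally show ?thesis .
  qed
  obtain r l where r: "strict_mono r" "l \<in> Ej (Suc j)" "(\<lambda>n. NE (Suc j) (w (r n) - l)) \<longlonglongrightarrow> 0"
    using EE.subseq[of w j "C * R", OF wE wb] by (elim exE conjE)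
  have wS: "w (r n) \<in> Ej (Suc j)" for n using wE[of "r n"] EE.step_sub[of j] by (rule subsetD[rotated])
  have lX: "(\<lambda>n. NX (w (r n) - l)) \<longlonglongrightarrow> 0"
    by (rule cont[where j="Suc j" and s="\<lambda>n. w (r n)", OF wS r(2) r(3)])
  have lY: "(\<lambda>n. NY (T (w (r n)) - y)) \<longlonglongrightarrow> 0"
    using LIMSEQ_subseq_LIMSEQ[OF ly r(1)] unfolding comp_def .
  have wX: "w (r n) \<in> X" for n by (rule G_X[OF wG])
  have wY: "T (w (r n)) \<in> Y" for n by (rule G_Y[OF wG])
  have lXX: "l \<in> X" using r(2) EX by blast
  have cau: "\<exists>M. \<forall>a\<ge>M. \<forall>b\<ge>M. nG (w (r a) - w (r b)) < e" if e: "e > 0" for e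
  proof -
    have e2: "e / 2 > 0" using e by simp
    obtain M1 where M1: "\<forall>a\<ge>M1. \<forall>b\<ge>M1. NX (w (r a) - w (r b)) < e / 2"
      using XX.conv_cauchy[of "\<lambda>n. w (r n)", OF wX lXX lX e2] by blast
    obtain M2 where M2: "\<forall>a\<ge>M2. \<forall>b\<ge>M2. NY (T (w (r a)) - T (w (r b))) < e / 2"
      using YY.conv_cauchy[of "\<lambda>n. T (w (r n))", OF wY y lY e2] by blast
    have "nG (w (r a) - w (r b)) < e" if ab: "a \<ge> max M1 M2" "b \<ge> max M1 M2" for a b
    proof -
      have "nG (w (r a) - w (r b)) = NX (w (r a) - w (r b)) + NY (T (w (r a)) - T (w (r b)))"
        unfolding nG_def using Tdiff[OF wX wX] by simp
      moreover have "NX (w (r a) - w (r b)) < e / 2" using M1 ab by simp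
      moreover have "NY (T (w (r a)) - T (w (r b))) < e / 2" using M2 ab by simp
      ultimately show ?thesis by simp
    qed
    then show ?thesis by blast
  qed
  have wrG: "w (r n) \<in> G" for n by (rule wG)
  have "\<exists>w0\<in>G. (\<lambda>n. nG (w (r n) - w0)) \<longlonglongrightarrow> 0" by (rule GG.complete[of "\<lambda>n. w (r n)", OF wrG cau])
  then obtain w0 where w0: "w0 \<in> G" "(\<lambda>n. nG (w (r n) - w0)) \<longlonglongrightarrow> 0" by blast
  have "(\<lambda>n. NY (T (w (r n)) - T w0)) \<longlonglongrightarrow> 0"
  proof (rule squeeze0)
    show "0 \<le> NY (T (w (r n)) - T w0)" for n by (rule YY.nonneg[OF YY.diff_mem[OF wY G_Y[OF w0(1)]]])
    show "NY (T (w (r n)) - T w0) \<le> nG (w (r n) - w0)" for n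
      using NY_le[OF G_diff[OF wrG w0(1)]] Tdiff[OF wX G_X[OF w0(1)]] by simp
    show "(\<lambda>n. nG (w (r n) - w0)) \<longlonglongrightarrow> 0" by (rule w0(2))
  qed
  then have "T w0 = y" by (rule YY.lim_unique[of "\<lambda>n. T (w (r n))", OF wY G_Y[OF w0(1)] y _ lY])
  then show ?thesis using r(1) w0 by blast
qed

definition ker where "ker = {k\<in>G. T k = 0}"
definition dk where "dk u = Inf ((\<lambda>k. nG (u - k)) ` ker)"

lemma ker0: "0 \<in> ker" unfolding ker_def using G_0 T0 by simp

lemma ker_G: "k \<in> ker \<Longrightarrow> k \<in> G" unfolding ker_def by simp
lemma ker_T: "k \<in> ker \<Longrightarrow> T k = 0" unfolding ker_def by simp

lemma dk_bdd: "u \<in> G \<Longrightarrow> bdd_below ((\<lambda>k. nG (u - k)) ` ker)"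
  unfolding bdd_below_def using GG.nonneg G_diff ker_G by blast

lemma dk_lower: "u \<in> G \<Longrightarrow> k \<in> ker \<Longrightarrow> dk u \<le> nG (u - k)"
  unfolding dk_def by (rule cInf_lower) (auto intro: dk_bdd)

lemma dk_nonneg: "u \<in> G \<Longrightarrow> 0 \<le> dk u"
  unfolding dk_def using ker0 by (intro cInf_greatest) (auto intro: GG.nonneg G_diff ker_G)

lemma dk_approx: assumes "u \<in> G" "e > 0" shows "\<exists>k\<in>ker. nG (u - k) < dk u + e"
proof -
  have "Inf ((\<lambda>k. nG (u - k)) ` ker) < dk u + e" unfolding dk_def using assms(2) by simp
  then show ?thesis
    using cInf_less_iff[of "(\<lambda>k. nG (u - k)) ` ker" "dk u + e"] ker0 dk_bdd[OF assms(1)] by auto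
qed

lemma ker_add: "k \<in> ker \<Longrightarrow> k' \<in> ker \<Longrightarrow> k + k' \<in> ker"
  unfolding ker_def using G_add Tadd G_X by auto
lemma ker_scale: "k \<in> ker \<Longrightarrow> c *\<^sub>R k \<in> ker"
  unfolding ker_def using G_scale Tscale G_X by auto

lemma claimA: "\<exists>C. \<forall>u\<in>G. dk u \<le> C * NY (T u)"
proof (rule ccontr)
  assume neg: "\<not> (\<exists>C. \<forall>u\<in>G. dk u \<le> C * NY (T u))"
  have h: "\<forall>n. \<exists>u. u \<in> G \<and> real (Suc n) * NY (T u) < dk u"
  proof
    fix n
    have "\<not> (\<forall>u\<in>G. dk u \<le> real (Suc n) * NY (T u))" using neg by blast
    then show "\<exists>u. u \<in> G \<and> real (Suc n) * NY (T u) < dk u" by (auto simp: not_le)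
  qed
  obtain u where u: "\<forall>n. u n \<in> G \<and> real (Suc n) * NY (T (u n)) < dk (u n)" by (rule exE[OF choice[OF h]])
  have uG: "u n \<in> G" and ult: "real (Suc n) * NY (T (u n)) < dk (u n)" for n using spec[OF u, of n] by simp_all
  have nyp: "0 \<le> NY (T (u n))" for n by (rule YY.nonneg[OF G_Y[OF uG]])
  have dpos: "dk (u n) > 0" for n
  proof -
    have "0 \<le> real (Suc n) * NY (T (u n))" using nyp[of n] by simp
    then show ?thesis using ult[of n] by linarith
  qed
  have h2: "\<forall>n. \<exists>k. k \<in> ker \<and> nG (u n - k) < dk (u n) + dk (u n)"
    using dk_approx[OF uG dpos] by blast
  obtain k where k: "\<forall>n. k n \<in> ker \<and> nG (u n - k n) < dk (u n) + dk (u n)" by (rule exE[OF choice[OF h2]])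
  have kK: "k n \<in> ker" and klt: "nG (u n - k n) < dk (u n) + dk (u n)" for n using spec[OF k, of n] by simp_all
  define w where "w n = (1 / dk (u n)) *\<^sub>R (u n - k n)" for n
  have ukG: "u n - k n \<in> G" for n by (rule G_diff[OF uG ker_G[OF kK]])
  have wG: "w n \<in> G" for n unfolding w_def by (rule G_scale[OF ukG])
  have wR: "nG (w n) \<le> 2" for n
  proof -
    have "nG (w n) = nG (u n - k n) / dk (u n)" unfolding w_def using GG.scale[OF ukG] dpos[of n] by simp
    also have "\<dots> \<le> 2" using klt[of n] dpos[of n] by (simp add: divide_le_eq)
    finally show ?thesis .
  qed
  have Tw: "T (w n) = (1 / dk (u n)) *\<^sub>R T (u n)" for n
    unfolding w_def using Tscale[OF G_X[OF ukG]] Tdiff[OF G_X[OF uG] G_X[OF ker_G[OF kK]]] ker_T[OF kK] by simp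
  have lw: "(\<lambda>n. NY (T (w n) - 0)) \<longlonglongrightarrow> 0"
  proof (rule squeeze0)
    show "0 \<le> NY (T (w n) - 0)" for n using YY.nonneg[OF G_Y[OF wG]] by simp
    show "NY (T (w n) - 0) \<le> inverse (real (Suc n))" for n
    proof -
      have "NY (T (w n) - 0) = NY (T (u n)) / dk (u n)" unfolding Tw using YY.scale[OF G_Y[OF uG]] dpos[of n] by simp
      also have "\<dots> \<le> inverse (real (Suc n))"
        using ult[of n] dpos[of n] by (simp add: divide_le_eq field_simps)
      finally show ?thesis .
    qed
    show "(\<lambda>n. inverse (real (Suc n))) \<longlonglongrightarrow> 0" by (rule LIMSEQ_inverse_real_of_nat)
  qed
  obtain r w0 where rw: "strict_mono r" "w0 \<in> G" "T w0 = 0" "(\<lambda>n. nG (w (r n) - w0)) \<longlonglongrightarrow> 0"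
    using bounded_conv[of w 2 0, OF wG wR YY.zero_mem lw] by (elim exE conjE)
  have w0K: "w0 \<in> ker" unfolding ker_def using rw(2,3) by simp
  have ge1: "1 \<le> nG (w n - w0)" for n
  proof -
    have kk: "k n + dk (u n) *\<^sub>R w0 \<in> ker" by (rule ker_add[OF kK ker_scale[OF w0K]])
    have eq: "w n - w0 = (1 / dk (u n)) *\<^sub>R (u n - (k n + dk (u n) *\<^sub>R w0))"
      unfolding w_def using dpos[of n] by (simp add: algebra_simps)
    have "nG (w n - w0) = nG (u n - (k n + dk (u n) *\<^sub>R w0)) / dk (u n)"
      unfolding eq using GG.scale[OF G_diff[OF uG ker_G[OF kk]]] dpos[of n] by simp
    moreover have "dk (u n) \<le> nG (u n - (k n + dk (u n) *\<^sub>R w0))" by (rule dk_lower[OF uG kk])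
    ultimately show ?thesis using dpos[of n] by (simp add: le_divide_eq)
  qed
  have one: "(1::real) > 0" by simp
  obtain M where "\<And>n. n \<ge> M \<Longrightarrow> nG (w (r n) - w0) < 1" using eventually_lt0[OF rw(4) one] by blast
  then have "nG (w (r M) - w0) < 1" by simp
  then show False using ge1[of "r M"] by simp
qed

lemma closed_range:
  fixes s :: "nat \<Rightarrow> 'a"
  assumes sE: "\<And>n. s n \<in> (\<Union>j. Ej j)" and sY: "\<And>n. T (s n) \<in> Y" and y: "y \<in> Y"
    and ly: "(\<lambda>n. NY (T (s n) - y)) \<longlonglongrightarrow> 0"
  shows "\<exists>u\<in>(\<Union>j. Ej j). T u = y"
proof -
  have sG: "s n \<in> G" for n using sE[of n] EX sY[of n] GI by blast
  obtain C where C: "\<forall>u\<in>G. dk u \<le> C * NY (T u)" using claimA by blast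
  have one: "(1::real) > 0" by simp
  obtain N where N: "\<And>n. n \<ge> N \<Longrightarrow> NY (T (s n) - y) < 1" using eventually_lt0[OF ly one] by blast
  define s' where "s' n = s (n + N)" for n
  have s'G: "s' n \<in> G" for n unfolding s'_def by (rule sG)
  have h: "\<forall>n. \<exists>k. k \<in> ker \<and> nG (s' n - k) < dk (s' n) + 1"
    using dk_approx[OF s'G one] by blast
  obtain k where k: "\<forall>n. k n \<in> ker \<and> nG (s' n - k n) < dk (s' n) + 1" by (rule exE[OF choice[OF h]])
  have kK: "k n \<in> ker" and klt: "nG (s' n - k n) < dk (s' n) + 1" for n using spec[OF k, of n] by simp_all
  define w where "w n = s' n - k n" for n
  have wG: "w n \<in> G" for n unfolding w_def by (rule G_diff[OF s'G ker_G[OF kK]])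
  have Tw: "T (w n) = T (s' n)" for n
    unfolding w_def using Tdiff[OF G_X[OF s'G] G_X[OF ker_G[OF kK]]] ker_T[OF kK] by simp
  have wR: "nG (w n) \<le> \<bar>C\<bar> * (NY y + 1) + 1" for n
  proof -
    have "NY (T (s' n)) \<le> NY y + NY (T (s' n) - y)" by (rule YY.Ndiff[OF G_Y[OF s'G] y])
    moreover have "NY (T (s' n) - y) < 1" unfolding s'_def by (rule N) simp
    ultimately have ny: "NY (T (s' n)) \<le> NY y + 1" by simp
    have "dk (s' n) \<le> C * NY (T (s' n))" using C s'G by blast
    also have "\<dots> \<le> \<bar>C\<bar> * NY (T (s' n))" using YY.nonneg[OF G_Y[OF s'G]] by (simp add: mult_right_mono)
    also have "\<dots> \<le> \<bar>C\<bar> * (NY y + 1)" using ny by (simp add: mult_left_mono)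
    finally have "dk (s' n) \<le> \<bar>C\<bar> * (NY y + 1)" .
    then show ?thesis using klt[of n] unfolding w_def by simp
  qed
  have lw: "(\<lambda>n. NY (T (w n) - y)) \<longlonglongrightarrow> 0"
    unfolding Tw s'_def using LIMSEQ_ignore_initial_segment[OF ly, of N] .
  obtain r w0 where rw: "strict_mono r" "w0 \<in> G" "T w0 = y" "(\<lambda>n. nG (w (r n) - w0)) \<longlonglongrightarrow> 0"
    using bounded_conv[OF wG wR y lw] by (elim exE conjE)
  have "w0 \<in> (\<Union>j. Ej j)" by (rule H[OF G_X[OF rw(2)] G_Y[OF rw(2)]])
  then show ?thesis using rw(3) by blast
qed

end

context dfs begin

lemma closed_of_mclosed:
  assumes mc: "mclosed M" and MB: "M \<subseteq> (\<Union>j. Bs j)"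
  shows "closedin (lc_inductive_limit Bs Ns) M"
  unfolding closedin_def topspace_lc
proof (intro conjI)
  show "M \<subseteq> (\<Union>j. Bs j)" by (rule MB)
  show "openin (lc_inductive_limit Bs Ns) ((\<Union>j. Bs j) - M)"
    unfolding openin_lc
  proof (intro conjI ballI)
    show "(\<Union>j. Bs j) - M \<subseteq> (\<Union>j. Bs j)" by blast
    fix x assume x: "x \<in> (\<Union>j. Bs j) - M"
    then obtain m where xm: "x \<in> Bs m" by blast
    have xM: "x \<notin> M" using x by blast
    obtain V where V: "V \<subseteq> (\<Union>j. Bs j)" "absolutely_convex V" "\<forall>j. \<exists>r>0. {x\<in>Bs j. Ns j x < r} \<subseteq> V"
        "\<forall>v\<in>V. x + v \<notin> M"
      using complement_nbhd[OF mc xm xM] by (elim exE conjE)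
    have "(\<lambda>v. x + v) ` V \<subseteq> (\<Union>j. Bs j) - M"
    proof
      fix y assume "y \<in> (\<lambda>v. x + v) ` V"
      then obtain v where v: "v \<in> V" "y = x + v" by blast
      have "x \<in> (\<Union>j. Bs j)" using xm by blast
      moreover have "v \<in> (\<Union>j. Bs j)" using v(1) V(1) by blast
      ultimately have "x + v \<in> (\<Union>j. Bs j)" by (rule subspace_add[OF union_subspace])
      moreover have "x + v \<notin> M" using V(4) v(1) by blast
      ultimately show "y \<in> (\<Union>j. Bs j) - M" using v(2) by blast
    qed
    then show "\<exists>V. V \<subseteq> (\<Union>j. Bs j) \<and> absolutely_convex V \<and>
          (\<forall>j. \<exists>r>0. {y\<in>Bs j. Ns j y < r} \<subseteq> V) \<and> (\<lambda>v. x + v) ` V \<subseteq> (\<Union>j. Bs j) - M"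
      using V(1,2,3) by (intro exI[of _ V]) simp
  qed
qed

end

lemma DFS_dfs: "DFS_limit E tau Bs Ns \<Longrightarrow> dfs Bs Ns"
  unfolding DFS_limit_def dfs_def by (elim conjE) (intro conjI; assumption)
lemma DFS_eq: "DFS_limit E tau Bs Ns \<Longrightarrow> E = (\<Union>j. Bs j)"
  unfolding DFS_limit_def by (elim conjE) assumption
lemma DFS_top: "DFS_limit E tau Bs Ns \<Longrightarrow> tau = lc_inductive_limit Bs Ns"
  unfolding DFS_limit_def by (elim conjE) assumption

theorem mainTheorem11:
  fixes T :: "'a::real_vector \<Rightarrow> 'b::real_vector"
    and E Esh :: "'a set" and tE tEsh :: "'a topology"
    and Ej Eshk :: "nat \<Rightarrow> 'a set" and NE NEsh :: "nat \<Rightarrow> 'a \<Rightarrow> real"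
    and F Fsh :: "'b set" and tF tFsh :: "'b topology"
    and Fk :: "nat \<Rightarrow> 'b set" and NF :: "nat \<Rightarrow> 'b \<Rightarrow> real"
  assumes dfsE: "DFS_limit E tE Ej NE"
    and dfsEsh: "DFS_limit Esh tEsh Eshk NEsh"
    and dfsF: "DFS_limit F tF Fk NF"
    and tvsFsh: "hausdorff_tvs Fsh tFsh"
    and pairE: "E \<subseteq> Esh" "continuous_map tE tEsh id"
    and pairF: "F \<subseteq> Fsh" "continuous_map tF tFsh id"
    and E_in_Esh0: "E \<subseteq> Eshk 0" "continuous_map tE (norm_topology (Eshk 0) (NEsh 0)) id"
    and linT: "is_linear_on Esh T"
    and contT: "T ` Esh \<subseteq> Fsh" "continuous_map tEsh tFsh T"
    and contT_E: "T ` E \<subseteq> F" "continuous_map tE tF T"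
    and propH: "\<forall>u\<in>Esh. T u \<in> F \<longrightarrow> u \<in> E"
  shows "closedin tF (T ` E)"
proof -
  interpret EE: dfs Ej NE by (rule DFS_dfs[OF dfsE])
  interpret ES: dfs Eshk NEsh by (rule DFS_dfs[OF dfsEsh])
  interpret FF: dfs Fk NF by (rule DFS_dfs[OF dfsF])
  interpret X0: bspace "Eshk 0" "NEsh 0" by (rule ES.bs)
  have Eeq: "E = (\<Union>j. Ej j)" by (rule DFS_eq[OF dfsE])
  have Esheq: "Esh = (\<Union>j. Eshk j)" by (rule DFS_eq[OF dfsEsh])
  have Feq: "F = (\<Union>j. Fk j)" by (rule DFS_eq[OF dfsF])
  have tEeq: "tE = lc_inductive_limit Ej NE" by (rule DFS_top[OF dfsE])
  have tEsheq: "tEsh = lc_inductive_limit Eshk NEsh" by (rule DFS_top[OF dfsEsh])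
  have tFeq: "tF = lc_inductive_limit Fk NF" by (rule DFS_top[OF dfsF])
  have X0Esh: "Eshk 0 \<subseteq> Esh" unfolding Esheq by blast
  have EX: "Ej j \<subseteq> Eshk 0" for j using E_in_Esh0(1) unfolding Eeq by blast
  have lin1: "\<forall>x\<in>Esh. \<forall>y\<in>Esh. T (x + y) = T x + T y" using linT unfolding is_linear_on_def by (rule conjunct1)
  have lin2: "\<forall>c. \<forall>x\<in>Esh. T (c *\<^sub>R x) = c *\<^sub>R T x" using linT unfolding is_linear_on_def by (rule conjunct2)
  have Tadd: "T (x + y) = T x + T y" if "x \<in> Eshk 0" "y \<in> Eshk 0" for x y
  proof -
    have xE: "x \<in> Esh" using that(1) X0Esh by (rule subsetD[rotated])
    have yE: "y \<in> Esh" using that(2) X0Esh by (rule subsetD[rotated])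
    show ?thesis using lin1 xE yE by simp
  qed
  have Tscale: "T (c *\<^sub>R x) = c *\<^sub>R T x" if "x \<in> Eshk 0" for c x
  proof -
    have xE: "x \<in> Esh" using that X0Esh by (rule subsetD[rotated])
    show ?thesis using lin2 xE by simp
  qed
  have Haus: "Hausdorff_space tFsh" using tvsFsh unfolding hausdorff_tvs_def by blast
  have cont: "(\<lambda>n. NEsh 0 (s n - l)) \<longlonglongrightarrow> 0"
    if s: "\<And>n::nat. s n \<in> Ej j" and l: "l \<in> Ej j" and lim: "(\<lambda>n. NE j (s n - l)) \<longlonglongrightarrow> 0" for j s l
  proof -
    interpret J: bspace "Ej j" "NE j" by (rule EE.bs)
    have "limitin (norm_topology (Ej j) (NE j)) s l sequentially" using J.limitin_iff[OF s] l lim by simp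
    then have "limitin tE (id \<circ> s) (id l) sequentially"
      unfolding tEeq by (rule continuous_map_limit[OF EE.cont_step])
    then have "limitin (norm_topology (Eshk 0) (NEsh 0)) (id \<circ> (id \<circ> s)) (id (id l)) sequentially"
      by (rule continuous_map_limit[OF E_in_Esh0(2)])
    then have "limitin (norm_topology (Eshk 0) (NEsh 0)) s l sequentially" by simp
    moreover have sX: "s n \<in> Eshk 0" for n using s[of n] EX[of j] by (rule subsetD[rotated])
    ultimately have "l \<in> Eshk 0 \<and> (\<lambda>n. NEsh 0 (s n - l)) \<longlonglongrightarrow> 0" using X0.limitin_iff[of s l, OF sX] by simp
    then show ?thesis by (rule conjunct2)
  qed
  have mc: "FF.mclosed (T ` E)"
    unfolding FF.mclosed_def
  proof (intro allI impI)
    fix p z and s :: "nat \<Rightarrow> 'b"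
    assume s: "\<forall>n. s n \<in> T ` E \<inter> Fk p" and z: "z \<in> Fk p" and lz: "(\<lambda>n. NF p (s n - z)) \<longlonglongrightarrow> 0"
    interpret Y: bspace "Fk p" "NF p" by (rule FF.bs)
    have graph: "T u = v"
      if a: "\<And>n::nat. w n \<in> Eshk 0" "\<And>n. T (w n) \<in> Fk p" "u \<in> Eshk 0" "v \<in> Fk p"
        "(\<lambda>n. NEsh 0 (w n - u)) \<longlonglongrightarrow> 0" "(\<lambda>n. NF p (T (w n) - v)) \<longlonglongrightarrow> 0" for w u v
    proof -
      have "limitin (norm_topology (Eshk 0) (NEsh 0)) w u sequentially" using X0.limitin_iff[OF a(1)] a(3,5) by simp
      then have "limitin tEsh (id \<circ> w) (id u) sequentially"
        unfolding tEsheq by (rule continuous_map_limit[OF ES.cont_step])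
      then have "limitin tFsh (T \<circ> (id \<circ> w)) (T (id u)) sequentially"
        by (rule continuous_map_limit[OF contT(2)])
      then have l1: "limitin tFsh (\<lambda>n. T (w n)) (T u) sequentially" by (simp add: comp_def)
      have "limitin (norm_topology (Fk p) (NF p)) (\<lambda>n. T (w n)) v sequentially"
        using Y.limitin_iff[OF a(2)] a(4,6) by simp
      then have "limitin tF (id \<circ> (\<lambda>n. T (w n))) (id v) sequentially"
        unfolding tFeq by (rule continuous_map_limit[OF FF.cont_step])
      then have "limitin tFsh (id \<circ> (id \<circ> (\<lambda>n. T (w n)))) (id (id v)) sequentially"
        by (rule continuous_map_limit[OF pairF(2)])
      then have l2: "limitin tFsh (\<lambda>n. T (w n)) v sequentially" by (simp add: comp_def)
      show ?thesis by (rule limitin_Hausdorff_unique[OF l1 l2 _ Haus]) simp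
    qed
    have Hp: "u \<in> (\<Union>j. Ej j)" if u: "u \<in> Eshk 0" "T u \<in> Fk p" for u
    proof -
      have "u \<in> Esh" using u(1) X0Esh by blast
      moreover have "T u \<in> F" using u(2) unfolding Feq by blast
      ultimately have "u \<in> E" using propH by blast
      then show "u \<in> (\<Union>j. Ej j)" unfolding Eeq .
    qed
    have crI: "cr (Eshk 0) (NEsh 0) (Fk p) (NF p) T Ej NE"
    proof (rule cr.intro)
      show "bspace (Eshk 0) (NEsh 0)" by (rule ES.bs)
      show "bspace (Fk p) (NF p)" by (rule FF.bs)
      show "dfs Ej NE" by (rule DFS_dfs[OF dfsE])
      show "T (x + y) = T x + T y" if "x \<in> Eshk 0" "y \<in> Eshk 0" for x y using that by (rule Tadd)
      show "T (c *\<^sub>R x) = c *\<^sub>R T x" if "x \<in> Eshk 0" for c x using that by (rule Tscale)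
      show "T u = v" if "\<And>n. w n \<in> Eshk 0" "\<And>n. T (w n) \<in> Fk p" "u \<in> Eshk 0" "v \<in> Fk p"
        "(\<lambda>n. NEsh 0 (w n - u)) \<longlonglongrightarrow> 0" "(\<lambda>n. NF p (T (w n) - v)) \<longlonglongrightarrow> 0" for w u v
        using that by (rule graph)
      show "Ej j \<subseteq> Eshk 0" for j by (rule EX)
      show "(\<lambda>n. NEsh 0 (w n - l)) \<longlonglongrightarrow> 0"
        if "\<And>n. w n \<in> Ej j" "l \<in> Ej j" "(\<lambda>n. NE j (w n - l)) \<longlonglongrightarrow> 0" for j w l
        using that by (rule cont)
      show "u \<in> (\<Union>j. Ej j)" if "u \<in> Eshk 0" "T u \<in> Fk p" for u using that by (rule Hp)
    qed
    have h: "\<forall>n. \<exists>u. u \<in> E \<and> T u = s n"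
    proof
      fix n
      have "s n \<in> T ` E" using s by simp
      then obtain u where "s n = T u" "u \<in> E" by (rule imageE)
      then show "\<exists>u. u \<in> E \<and> T u = s n" by (intro exI[of _ u]) simp
    qed
    obtain u where u: "\<forall>n. u n \<in> E \<and> T (u n) = s n" by (rule exE[OF choice[OF h]])
    have uE: "u n \<in> (\<Union>j. Ej j)" for n using u unfolding Eeq by blast
    have uY: "T (u n) \<in> Fk p" for n using u s by simp
    have luz: "(\<lambda>n. NF p (T (u n) - z)) \<longlonglongrightarrow> 0" using lz u by simp
    have "\<exists>v\<in>(\<Union>j. Ej j). T v = z" by (rule cr.closed_range[OF crI, of u, OF uE uY z luz])
    then show "z \<in> T ` E" unfolding Eeq by blast
  qed
  have "T ` E \<subseteq> (\<Union>j. Fk j)" using contT_E(1) unfolding Feq .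
  then show ?thesis unfolding tFeq by (rule FF.closed_of_mclosed[OF mc])
qed

end
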